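(* Let $\alpha\in\mathcal{A}$ and let $F:\mathbb{R}^e \to L\big((\mathbb{R}^d)^{\otimes b}, \mathbb{R}^e \big)$ be a globally Lipschitz continuous map for some $b \geq 1$. Then \[ \mathbb{E}\big[\|J^\gamma_{\alpha}(F) \|^2\big] = O\big(h^{2\,\mathrm{ord}(\alpha) + 1}\big). \]
   Context: Let $h>0$ be a step size and let $\gamma=(\gamma^\tau,\gamma^{\omega})^\top:[0,1]\to\mathbb{R}^{1+d}$ be a (random) piecewise linear path with $m\in\mathbb{N}$ pieces, almost surely of finite length, with vertices at $0=r_0<r_1<\cdots<r_m=1$, such that for each piece $i$: the time increment $\gamma^\tau_{r_i,r_{i+1}}$ is deterministic with $\gamma^\tau_{r_i,r_{i+1}}=O(h)$, and the space increment satisfies $\mathbb{E}\big[|(\gamma^{\omega}_{r_i,r_{i+1}})_j|^{2k}\big]=O(h^k)$ for every $j\in\{1,\dots,d\}$ and $k\in\mathbb{N}$. Let $y^\gamma$ solve the controlled differential equation $dy^\gamma_r = f(y^\gamma_r)\,d\gamma^\tau(r) + g(y^\gamma_r)\,d\gamma^{\omega}(r)$, $r\in[0,1]$, with $y^\gamma_0=y_0\in L^4(\mathbb{R}^e)$ independent of $\gamma$, where $f:\mathbb{R}^e\to\mathbb{R}^e$ and $g:\mathbb{R}^e\to\mathbb{R}^{e\times d}$ satisfy $\|f(y)\|\le C(1+\|y\|)$, $\|g(y)\|\le C(1+\|y\|)$, and $\mathbb{E}\big[\exp\big(16\,C\int_0^1|d\gamma(u)|\big)\big]<\infty$ (here $\int_0^1|d\gamma(u)|$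 is the length of $\gamma$). For a multi-index $\alpha=(\alpha_1,\dots,\alpha_n)\in\mathcal{A}=\bigcup_{n\ge0}\{\tau,\omega\}^n$, define \[ I^\gamma_{\alpha}(F) := \int_0^1 \int_0^{r_1} \cdots \int_0^{r_{n-1}} F(y^\gamma_{r_n})\, d\gamma^{\alpha_1}(r_n)\cdots d\gamma^{\alpha_n}(r_1), \] where $d\gamma^\tau$ is the scalar time component and each $d\gamma^{\omega}$ enters via tensor product $\otimes\, d\gamma^{\omega}$; $I^\gamma_\alpha(1)$ is the same with $F$ replaced by the scalar $1$; and $J^\gamma_{\alpha}(F) := I^\gamma_{\alpha}(F) - F(y^\gamma_0)I^\gamma_{\alpha}(1)$. The order of $\alpha$ is $\mathrm{ord}(\alpha)=|\alpha|_\tau+\tfrac12|\alpha|_\omega$, where $|\alpha|_\tau$ and $|\alpha|_\omega$ count the entries of $\alpha$ equal to $\tau$ and $\omega$ respectively. *)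

theory Defs
  imports "HOL-Probability.Probability" "HOL-Library.Landau_Symbols"
begin

text \<open>Letters of multi-indices: Tau (time) and Omega (space).\<close>
datatype letter = Tau | Omega

definition cnt :: "letter \<Rightarrow> letter list \<Rightarrow> nat" where
  "cnt a al = length (filter (\<lambda>b. b = a) al)"

definition ord :: "letter list \<Rightarrow> real" where
  "ord al = real (cnt Tau al) + real (cnt Omega al) / 2"

definition pl_deriv :: "(nat \<Rightarrow> real) \<Rightarrow> nat \<Rightarrow> (real \<Rightarrow> 'a::real_vector) \<Rightarrow> real \<Rightarrow> 'a" where
  "pl_deriv r m p u =
     (\<Sum>i<m. indicator {r i..<r (Suc i)} u *\<^sub>R
              ((1 / (r (Suc i) - r i)) *\<^sub>R (p (r (Suc i)) - p (r i))))"

text \<open>The letter list is given OUTERMOST FIRST (i.e. reversed multi-index).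
  The list ks holds the tensor component indices of the d-omega factors, ordered
  as the omega letters occur in the (non-reversed) multi-index; the outermost
  omega integral uses the last index.\<close>
fun iint :: "(real \<Rightarrow> 'v::real_normed_vector) \<Rightarrow> (real \<Rightarrow> real \<times> (real^'d))
              \<Rightarrow> letter list \<Rightarrow> 'd list \<Rightarrow> real \<Rightarrow> 'v" where
  "iint phi dg [] ks s = phi s"
| "iint phi dg (Tau # be) ks s =
     integral {0..s} (\<lambda>u. fst (dg u) *\<^sub>R iint phi dg be ks u)"
| "iint phi dg (Omega # be) ks s =
     integral {0..s} (\<lambda>u. (snd (dg u) $ last ks) *\<^sub>R iint phi dg be (butlast ks) u)"

definition I_F :: "(nat \<Rightarrow> real) \<Rightarrow> nat \<Rightarrow> (real \<Rightarrow> real \<times> (real^'d)) \<Rightarrow> (real \<Rightarrow> 'y)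
                   \<Rightarrow> ('y \<Rightarrow> 'v::real_normed_vector) \<Rightarrow> letter list \<Rightarrow> 'd list \<Rightarrow> 'v" where
  "I_F r m gam y F al ks = iint (\<lambda>u. F (y u)) (pl_deriv r m gam) (rev al) ks 1"

definition I_one :: "(nat \<Rightarrow> real) \<Rightarrow> nat \<Rightarrow> (real \<Rightarrow> real \<times> (real^'d))
                   \<Rightarrow> letter list \<Rightarrow> 'd list \<Rightarrow> real" where
  "I_one r m gam al ks = iint (\<lambda>u. 1::real) (pl_deriv r m gam) (rev al) ks 1"

definition J_F :: "(nat \<Rightarrow> real) \<Rightarrow> nat \<Rightarrow> (real \<Rightarrow> real \<times> (real^'d)) \<Rightarrow> (real \<Rightarrow> 'y)
                   \<Rightarrow> ('y \<Rightarrow> 'v::real_normed_vector) \<Rightarrow> letter list \<Rightarrow> 'd list \<Rightarrow> 'v" where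
  "J_F r m gam y F al ks = I_F r m gam y F al ks - I_one r m gam al ks *\<^sub>R F (y 0)"

definition J_norm2 :: "(nat \<Rightarrow> real) \<Rightarrow> nat \<Rightarrow> (real \<Rightarrow> real \<times> (real^'d::finite)) \<Rightarrow> (real \<Rightarrow> 'y)
                   \<Rightarrow> ('y \<Rightarrow> 'v::real_normed_vector) \<Rightarrow> letter list \<Rightarrow> real" where
  "J_norm2 r m gam y F al =
     (\<Sum>ks\<in>{ks::'d list. length ks = cnt Omega al}. (norm (J_F r m gam y F al ks))\<^sup>2)"

definition pl_length :: "(nat \<Rightarrow> real) \<Rightarrow> nat \<Rightarrow> (real \<Rightarrow> real \<times> (real^'d)) \<Rightarrow> real" where
  "pl_length r m gam = (\<Sum>i<m. norm (gam (r (Suc i)) - gam (r i)))"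

end

theory Submission
  imports Defs
begin

lemma matvec_norm_le:
  fixes A :: "real^'n^'m" and x :: "real^'n"
  shows "norm (A *v x) \<le> norm A * norm x"
proof -
  have c: "\<bar>(A *v x) $ i\<bar> \<le> norm (A $ i) * norm x" for i
  proof -
    have "(A *v x) $ i = A $ i \<bullet> x"
      by (simp add: matrix_vector_mult_def inner_vec_def)
    then show ?thesis using Cauchy_Schwarz_ineq2[of "A $ i" x] by simp
  qed
  have "(norm (A *v x))\<^sup>2 = (\<Sum>i\<in>UNIV. ((A *v x) $ i)\<^sup>2)"
    by (simp add: norm_vec_def L2_set_def sum_nonneg)
  also have "\<dots> \<le> (\<Sum>i\<in>UNIV. (norm (A $ i))\<^sup>2 * (norm x)\<^sup>2)"
  proof (rule sum_mono)
    fix i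
    have "((A *v x) $ i)\<^sup>2 = \<bar>(A *v x) $ i\<bar>\<^sup>2" by simp
    also have "\<dots> \<le> (norm (A $ i) * norm x)\<^sup>2"
      by (rule power_mono[OF c]) simp
    finally show "((A *v x) $ i)\<^sup>2 \<le> (norm (A $ i))\<^sup>2 * (norm x)\<^sup>2"
      by (simp add: power_mult_distrib)
  qed
  also have "\<dots> = (norm A * norm x)\<^sup>2"
    by (simp add: norm_vec_def L2_set_def sum_nonneg power_mult_distrib sum_distrib_right[symmetric])
  finally show ?thesis
    by (meson mult_nonneg_nonneg norm_ge_zero power2_le_imp_le)
qed

lemma r_facts:
  assumes r0: "r 0 = 0" and rm: "r m = (1::real)" and rmono: "strict_mono_on {..m} r"
  shows "\<And>i. i \<le> m \<Longrightarrow> 0 \<le> r i" "\<And>i. i \<le> m \<Longrightarrow> r i \<le> 1"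
    "\<And>i. i < m \<Longrightarrow> r i < r (Suc i)" "\<And>i j. i \<le> j \<Longrightarrow> j \<le> m \<Longrightarrow> r i \<le> r j" "0 < m"
proof -
  show lt: "\<And>i. i < m \<Longrightarrow> r i < r (Suc i)"
    using rmono by (auto simp: strict_mono_on_def)
  show le: "\<And>i j. i \<le> j \<Longrightarrow> j \<le> m \<Longrightarrow> r i \<le> r j"
    using rmono by (metis atMost_iff le_less order.trans strict_mono_on_def)
  show "\<And>i. i \<le> m \<Longrightarrow> 0 \<le> r i" using le[of 0] r0 by simp
  show "\<And>i. i \<le> m \<Longrightarrow> r i \<le> 1" using le[of _ m] rm by force
  show "0 < m" using r0 rm by (metis gr0I zero_neq_one)
qed

lemma r_cover:
  assumes r0: "r 0 = 0" and rm: "r m = (1::real)" and rmono: "strict_mono_on {..m} r"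
    and u: "u \<in> {0..1}"
  shows "\<exists>i<m. u \<in> {r i..r (Suc i)}"
proof -
  note rf = r_facts[OF r0 rm rmono]
  have "\<And>k. k \<le> m \<Longrightarrow> 0 < k \<Longrightarrow> u \<le> r k \<Longrightarrow> \<exists>i<k. u \<in> {r i..r (Suc i)}"
  proof -
    fix k assume "k \<le> m" "0 < k" "u \<le> r k"
    then show "\<exists>i<k. u \<in> {r i..r (Suc i)}"
    proof (induction k)
      case 0 then show ?case by simp
    next
      case (Suc k)
      show ?case
      proof (cases "u \<le> r k \<and> 0 < k")
        case True
        with Suc.IH Suc.prems show ?thesis by (metis Suc_leD less_Suc_eq)
      next
        case False
        then have "r k \<le> u" using Suc.prems u r0 by (cases "k = 0") auto
        with Suc.prems show ?thesis by auto
      qed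
    qed
  qed
  then show ?thesis using rf u rm by auto
qed

lemma step_has_integral:
  fixes \<Phi> :: "real \<Rightarrow> 'v::banach"
  assumes r0: "r 0 = 0" and rm: "r m = (1::real)" and rmono: "strict_mono_on {..m} r"
    and cont: "continuous_on {0..1} \<Phi>" and s: "0 \<le> s" "s \<le> 1"
  shows "((\<lambda>u. (\<Sum>i<m. indicator {r i..<r (Suc i)} u * a i) *\<^sub>R \<Phi> u) has_integral
           (\<Sum>i<m. a i *\<^sub>R integral {r i..min (r (Suc i)) s} \<Phi>)) {0..s}"
proof -
  note rf = r_facts[OF r0 rm rmono]
  have each: "((\<lambda>u. (indicator {r i..<r (Suc i)} u * a i) *\<^sub>R \<Phi> u) has_integral
           (a i *\<^sub>R integral {r i..min (r (Suc i)) s} \<Phi>)) {0..s}" if i: "i < m" for i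
  proof -
    have sub: "{r i..min (r (Suc i)) s} \<subseteq> {0..1}" using rf i s by auto
    have "\<Phi> integrable_on {r i..min (r (Suc i)) s}"
      by (rule integrable_continuous_real, rule continuous_on_subset[OF cont sub])
    then have "((\<lambda>u. a i *\<^sub>R \<Phi> u) has_integral a i *\<^sub>R integral {r i..min (r (Suc i)) s} \<Phi>) {r i..min (r (Suc i)) s}"
      by (intro has_integral_cmul integrable_integral)
    moreover have "max (r i) 0 = r i"
      using rf i by auto
    ultimately have "((\<lambda>u. if u \<in> {r i..r (Suc i)} then a i *\<^sub>R \<Phi> u else 0) has_integral
           a i *\<^sub>R integral {r i..min (r (Suc i)) s} \<Phi>) {0..s}"
      by (subst has_integral_restrict_Int) simp
    then show ?thesis
      by (rule has_integral_spike[OF negligible_sing[of "r (Suc i)"], rotated])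
         (auto simp: indicator_def)
  qed
  have "((\<lambda>u. \<Sum>i<m. (indicator {r i..<r (Suc i)} u * a i) *\<^sub>R \<Phi> u) has_integral
           (\<Sum>i<m. a i *\<^sub>R integral {r i..min (r (Suc i)) s} \<Phi>)) {0..s}"
    by (rule has_integral_sum) (auto intro: each)
  then show ?thesis by (simp only: scaleR_sum_left)
qed

lemma pl_deriv_fst:
  "fst (pl_deriv r m p u) = (\<Sum>i<m. indicator {r i..<r (Suc i)} u *
       ((fst (p (r (Suc i))) - fst (p (r i))) / (r (Suc i) - r i)))"
  by (simp add: pl_deriv_def fst_sum)

lemma pl_deriv_snd:
  "snd (pl_deriv r m p u) $ k = (\<Sum>i<m. indicator {r i..<r (Suc i)} u *
       ((snd (p (r (Suc i))) - snd (p (r i))) $ k / (r (Suc i) - r i)))"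
  by (simp add: pl_deriv_def snd_sum sum_component)

lemma integral_zero_if_empty:
  fixes f :: "real \<Rightarrow> 'v::banach"
  shows "b \<le> a \<Longrightarrow> integral {a..b} f = 0"
  by (cases "b < a") auto

lemma cont_integral_min:
  fixes \<Phi> :: "real \<Rightarrow> 'v::banach"
  assumes cont: "continuous_on {0..1} \<Phi>" and ab: "0 \<le> a" "a \<le> b" "b \<le> 1"
  shows "continuous_on {0..1} (\<lambda>s. integral {a..min b s} \<Phi>)"
proof -
  define cl where "cl s = max a (min b s)" for s
  have int: "\<Phi> integrable_on {a..b}"
    by (rule integrable_continuous_real, rule continuous_on_subset[OF cont]) (use ab in auto)
  have c1: "continuous_on {a..b} (\<lambda>x. integral {a..x} \<Phi>)"
    by (rule indefinite_integral_continuous_1[OF int])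
  have c2: "continuous_on {0..1} cl" unfolding cl_def by (intro continuous_intros)
  have "continuous_on {0..1} ((\<lambda>x. integral {a..x} \<Phi>) \<circ> cl)"
    by (rule continuous_on_compose[OF c2 continuous_on_subset[OF c1]]) (use ab in \<open>auto simp: cl_def\<close>)
  moreover have "((\<lambda>x. integral {a..x} \<Phi>) \<circ> cl) s = integral {a..min b s} \<Phi>" for s
  proof (cases "a \<le> min b s")
    case True then show ?thesis by (simp add: cl_def)
  next
    case False
    then have "cl s = a" using ab by (auto simp: cl_def)
    then show ?thesis using False by (simp add: integral_zero_if_empty)
  qed
  ultimately show ?thesis by simp
qed

definition VT :: "(nat \<Rightarrow> real) \<Rightarrow> nat \<Rightarrow> (real \<Rightarrow> real \<times> (real^'d)) \<Rightarrow> real" where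
  "VT r m p = (\<Sum>i<m. \<bar>fst (p (r (Suc i))) - fst (p (r i))\<bar>)"
definition VW :: "(nat \<Rightarrow> real) \<Rightarrow> nat \<Rightarrow> (real \<Rightarrow> real \<times> (real^'d)) \<Rightarrow> real" where
  "VW r m p = (\<Sum>i<m. norm (snd (p (r (Suc i))) - snd (p (r i))))"

lemma VT_nonneg: "0 \<le> VT r m p" unfolding VT_def by (simp add: sum_nonneg)
lemma VW_nonneg: "0 \<le> VW r m p" unfolding VW_def by (simp add: sum_nonneg)

lemma iint_Tau_rep:
  fixes phi :: "real \<Rightarrow> 'v::banach" and p :: "real \<Rightarrow> real \<times> (real^'d)"
  assumes r0: "r 0 = 0" and rm: "r m = (1::real)" and rmono: "strict_mono_on {..m} r"
    and cont: "continuous_on {0..1} (iint phi (pl_deriv r m p) be ks)" and s: "s \<in> {0..1}"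
  shows "iint phi (pl_deriv r m p) (Tau # be) ks s =
    (\<Sum>i<m. ((fst (p (r (Suc i))) - fst (p (r i))) / (r (Suc i) - r i)) *\<^sub>R
        integral {r i..min (r (Suc i)) s} (iint phi (pl_deriv r m p) be ks))"
  using step_has_integral[OF r0 rm rmono cont, of s
      "\<lambda>i. (fst (p (r (Suc i))) - fst (p (r i))) / (r (Suc i) - r i)"] s
  by (simp add: pl_deriv_fst integral_unique)

lemma iint_Omega_rep:
  fixes phi :: "real \<Rightarrow> 'v::banach" and p :: "real \<Rightarrow> real \<times> (real^'d)"
  assumes r0: "r 0 = 0" and rm: "r m = (1::real)" and rmono: "strict_mono_on {..m} r"
    and cont: "continuous_on {0..1} (iint phi (pl_deriv r m p) be (butlast ks))" and s: "s \<in> {0..1}"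
  shows "iint phi (pl_deriv r m p) (Omega # be) ks s =
    (\<Sum>i<m. ((snd (p (r (Suc i))) - snd (p (r i))) $ last ks / (r (Suc i) - r i)) *\<^sub>R
        integral {r i..min (r (Suc i)) s} (iint phi (pl_deriv r m p) be (butlast ks)))"
  using step_has_integral[OF r0 rm rmono cont, of s
      "\<lambda>i. (snd (p (r (Suc i))) - snd (p (r i))) $ last ks / (r (Suc i) - r i)"] s
  by (simp add: pl_deriv_snd integral_unique)

lemma cont_rep_sum:
  fixes \<Phi> :: "real \<Rightarrow> 'v::banach"
  assumes r0: "r 0 = 0" and rm: "r m = (1::real)" and rmono: "strict_mono_on {..m} r"
    and cont: "continuous_on {0..1} \<Phi>"
  shows "continuous_on {0..1} (\<lambda>s. \<Sum>i<m. c i *\<^sub>R integral {r i..min (r (Suc i)) s} \<Phi>)"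
proof -
  note rf = r_facts[OF r0 rm rmono]
  show ?thesis
    by (intro continuous_on_sum continuous_on_scaleR continuous_on_const cont_integral_min[OF cont])
       (use rf in auto)
qed

lemma iint_cont:
  fixes phi :: "real \<Rightarrow> 'v::banach" and p :: "real \<Rightarrow> real \<times> (real^'d)"
  assumes r0: "r 0 = 0" and rm: "r m = (1::real)" and rmono: "strict_mono_on {..m} r"
    and cont: "continuous_on {0..1} phi"
  shows "continuous_on {0..1} (iint phi (pl_deriv r m p) be ks)"
proof (induction be arbitrary: ks)
  case Nil then show ?case using cont by simp
next
  case (Cons a be)
  show ?case
  proof (cases a)
    case Tau
    show ?thesis unfolding Tau
      by (rule continuous_on_cong[THEN iffD2, OF refl _ cont_rep_sum[OF r0 rm rmono Cons.IH]])
         (rule iint_Tau_rep[OF r0 rm rmono Cons.IH])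
  next
    case Omega
    show ?thesis unfolding Omega
      by (rule continuous_on_cong[THEN iffD2, OF refl _ cont_rep_sum[OF r0 rm rmono Cons.IH]])
         (rule iint_Omega_rep[OF r0 rm rmono Cons.IH])
  qed
qed

lemma rep_bound:
  fixes \<Phi> :: "real \<Rightarrow> 'v::banach"
  assumes r0: "r 0 = 0" and rm: "r m = (1::real)" and rmono: "strict_mono_on {..m} r"
    and cont: "continuous_on {0..1} \<Phi>" and P: "\<And>u. u \<in> {0..1} \<Longrightarrow> norm (\<Phi> u) \<le> P"
    and s: "s \<in> {0..1}" and P0: "0 \<le> P"
  shows "norm (\<Sum>i<m. (d i / (r (Suc i) - r i)) *\<^sub>R integral {r i..min (r (Suc i)) s} \<Phi>)
          \<le> (\<Sum>i<m. \<bar>d i\<bar>) * P"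
proof -
  note rf = r_facts[OF r0 rm rmono]
  have "norm (\<Sum>i<m. (d i / (r (Suc i) - r i)) *\<^sub>R integral {r i..min (r (Suc i)) s} \<Phi>)
     \<le> (\<Sum>i<m. norm ((d i / (r (Suc i) - r i)) *\<^sub>R integral {r i..min (r (Suc i)) s} \<Phi>))"
    by (rule norm_sum)
  also have "\<dots> \<le> (\<Sum>i<m. \<bar>d i\<bar> * P)"
  proof (rule sum_mono)
    fix i assume "i \<in> {..<m}"
    then have i: "i < m" by simp
    have dpos: "0 < r (Suc i) - r i" using rf(3)[OF i] by simp
    have ri0: "0 \<le> r i" using rf(1)[of i] i by simp
    have "norm (integral {r i..min (r (Suc i)) s} \<Phi>) \<le> P * (r (Suc i) - r i)"
    proof (cases "r i \<le> min (r (Suc i)) s")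
      case True
      have "norm (integral {r i..min (r (Suc i)) s} \<Phi>) \<le> P * (min (r (Suc i)) s - r i)"
        by (rule integral_bound[OF True continuous_on_subset[OF cont]])
           (use i s ri0 rf(2)[of "Suc i"] in \<open>auto intro!: P\<close>)
      also have "\<dots> \<le> P * (r (Suc i) - r i)"
        by (rule mult_left_mono[OF _ P0]) simp
      finally show ?thesis .
    next
      case False
      then show ?thesis using P0 dpos by (simp add: integral_zero_if_empty)
    qed
    note nb = this
    have "norm ((d i / (r (Suc i) - r i)) *\<^sub>R integral {r i..min (r (Suc i)) s} \<Phi>)
        = (\<bar>d i\<bar> / (r (Suc i) - r i)) * norm (integral {r i..min (r (Suc i)) s} \<Phi>)"
      using dpos by (simp add: abs_div)
    also have "\<dots> \<le> (\<bar>d i\<bar> / (r (Suc i) - r i)) * (P * (r (Suc i) - r i))"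
      by (rule mult_left_mono[OF nb]) (use dpos in simp)
    also have "\<dots> = \<bar>d i\<bar> * P" using dpos by simp
    finally show "norm ((d i / (r (Suc i) - r i)) *\<^sub>R integral {r i..min (r (Suc i)) s} \<Phi>) \<le> \<bar>d i\<bar> * P" .
  qed
  also have "\<dots> = (\<Sum>i<m. \<bar>d i\<bar>) * P" by (simp add: sum_distrib_right)
  finally show ?thesis .
qed

lemma iint_bound:
  fixes phi :: "real \<Rightarrow> 'v::banach" and p :: "real \<Rightarrow> real \<times> (real^'d)"
  assumes r0: "r 0 = 0" and rm: "r m = (1::real)" and rmono: "strict_mono_on {..m} r"
    and cont: "continuous_on {0..1} phi" and B: "\<And>u. u \<in> {0..1} \<Longrightarrow> norm (phi u) \<le> B"
  shows "s \<in> {0..1} \<Longrightarrow> norm (iint phi (pl_deriv r m p) be ks s)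
          \<le> B * VT r m p ^ cnt Tau be * VW r m p ^ cnt Omega be"
proof (induction be arbitrary: ks s)
  case Nil then show ?case using B by (simp add: cnt_def)
next
  case (Cons a be)
  have "norm (phi 0) \<le> B" using B[of 0] by simp
  then have B0: "0 \<le> B" by (meson order_trans norm_ge_zero)
  define P where "P = B * VT r m p ^ cnt Tau be * VW r m p ^ cnt Omega be"
  have P0: "0 \<le> P" unfolding P_def by (intro mult_nonneg_nonneg zero_le_power B0 VT_nonneg VW_nonneg)
  show ?case
  proof (cases a)
    case Tau
    have "norm (iint phi (pl_deriv r m p) (Tau # be) ks s) \<le> VT r m p * P"
      unfolding iint_Tau_rep[OF r0 rm rmono iint_cont[OF r0 rm rmono cont] Cons.prems] VT_def
      by (rule rep_bound[OF r0 rm rmono iint_cont[OF r0 rm rmono cont] _ Cons.prems P0])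
         (simp add: Cons.IH P_def)
    then show ?thesis unfolding Tau P_def by (simp add: cnt_def mult_ac)
  next
    case Omega
    have "norm (iint phi (pl_deriv r m p) (Omega # be) ks s)
        \<le> (\<Sum>i<m. \<bar>(snd (p (r (Suc i))) - snd (p (r i))) $ last ks\<bar>) * P"
      unfolding iint_Omega_rep[OF r0 rm rmono iint_cont[OF r0 rm rmono cont] Cons.prems]
      by (rule rep_bound[OF r0 rm rmono iint_cont[OF r0 rm rmono cont] _ Cons.prems P0])
         (simp add: Cons.IH P_def)
    also have "\<dots> \<le> VW r m p * P"
      unfolding VW_def by (intro mult_right_mono[OF sum_mono P0] component_le_norm_cart)
    finally show ?thesis unfolding Omega P_def by (simp add: cnt_def mult_ac)
  qed
qed

lemma iint_lin:
  fixes phi :: "real \<Rightarrow> 'v::banach" and psi :: "real \<Rightarrow> real" and p :: "real \<Rightarrow> real \<times> (real^'d)"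
  assumes r0: "r 0 = 0" and rm: "r m = (1::real)" and rmono: "strict_mono_on {..m} r"
    and cont: "continuous_on {0..1} phi" and contp: "continuous_on {0..1} psi"
  shows "s \<in> {0..1} \<Longrightarrow> iint (\<lambda>u. phi u - psi u *\<^sub>R v) (pl_deriv r m p) be ks s
      = iint phi (pl_deriv r m p) be ks s - iint psi (pl_deriv r m p) be ks s *\<^sub>R v"
proof (induction be arbitrary: ks s)
  case Nil then show ?case by simp
next
  case (Cons a be)
  note rf = r_facts[OF r0 rm rmono]
  have contc: "continuous_on {0..1} (\<lambda>u. phi u - psi u *\<^sub>R v)"
    by (intro continuous_intros cont contp)
  have key: "integral {r i..min (r (Suc i)) s} (iint (\<lambda>u. phi u - psi u *\<^sub>R v) (pl_deriv r m p) be ks')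
     = integral {r i..min (r (Suc i)) s} (iint phi (pl_deriv r m p) be ks')
       - integral {r i..min (r (Suc i)) s} (iint psi (pl_deriv r m p) be ks') *\<^sub>R v"
    if i: "i < m" for i ks'
  proof -
    have sub: "{r i..min (r (Suc i)) s} \<subseteq> {0..1}" using rf i Cons.prems by auto
    have i1: "iint phi (pl_deriv r m p) be ks' integrable_on {r i..min (r (Suc i)) s}"
      by (rule integrable_continuous_real, rule continuous_on_subset[OF iint_cont[OF r0 rm rmono cont] sub])
    have i2: "iint psi (pl_deriv r m p) be ks' integrable_on {r i..min (r (Suc i)) s}"
      by (rule integrable_continuous_real, rule continuous_on_subset[OF iint_cont[OF r0 rm rmono contp] sub])
    have "integral {r i..min (r (Suc i)) s} (iint (\<lambda>u. phi u - psi u *\<^sub>R v) (pl_deriv r m p) be ks')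
      = integral {r i..min (r (Suc i)) s} (\<lambda>u. iint phi (pl_deriv r m p) be ks' u - iint psi (pl_deriv r m p) be ks' u *\<^sub>R v)"
      by (rule integral_cong) (use sub in \<open>auto intro: Cons.IH\<close>)
    also have "\<dots> = integral {r i..min (r (Suc i)) s} (iint phi (pl_deriv r m p) be ks')
       - integral {r i..min (r (Suc i)) s} (\<lambda>u. iint psi (pl_deriv r m p) be ks' u *\<^sub>R v)"
      by (rule integral_diff[OF i1 integrable_on_scaleR_left[OF i2]])
    also have "integral {r i..min (r (Suc i)) s} (\<lambda>u. iint psi (pl_deriv r m p) be ks' u *\<^sub>R v)
       = integral {r i..min (r (Suc i)) s} (iint psi (pl_deriv r m p) be ks') *\<^sub>R v"
      by (rule integral_unique, rule has_integral_scaleR_left, rule integrable_integral[OF i2])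
    finally show ?thesis .
  qed
  show ?case
  proof (cases a)
    case Tau
    show ?thesis unfolding Tau
      iint_Tau_rep[OF r0 rm rmono iint_cont[OF r0 rm rmono contc] Cons.prems]
      iint_Tau_rep[OF r0 rm rmono iint_cont[OF r0 rm rmono cont] Cons.prems]
      iint_Tau_rep[OF r0 rm rmono iint_cont[OF r0 rm rmono contp] Cons.prems]
      by (simp add: key scaleR_diff_right sum_subtractf scaleR_sum_left)
  next
    case Omega
    show ?thesis unfolding Omega
      iint_Omega_rep[OF r0 rm rmono iint_cont[OF r0 rm rmono contc] Cons.prems]
      iint_Omega_rep[OF r0 rm rmono iint_cont[OF r0 rm rmono cont] Cons.prems]
      iint_Omega_rep[OF r0 rm rmono iint_cont[OF r0 rm rmono contp] Cons.prems]
      by (simp add: key scaleR_diff_right sum_subtractf scaleR_sum_left)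
  qed
qed

lemma meas_fst: "f \<in> borel_measurable M \<Longrightarrow> (\<lambda>x. fst (f x)) \<in> borel_measurable M"
  for f :: "_ \<Rightarrow> 'a::topological_space \<times> 'b::topological_space"
  by (rule measurable_compose[OF _ borel_measurable_continuous_onI]) (auto intro: continuous_intros)
lemma meas_snd: "f \<in> borel_measurable M \<Longrightarrow> (\<lambda>x. snd (f x)) \<in> borel_measurable M"
  for f :: "_ \<Rightarrow> 'a::topological_space \<times> 'b::topological_space"
  by (rule measurable_compose[OF _ borel_measurable_continuous_onI]) (auto intro: continuous_intros)
lemma meas_nth: "f \<in> borel_measurable M \<Longrightarrow> (\<lambda>x. f x $ k :: real) \<in> borel_measurable M"
  for f :: "_ \<Rightarrow> real^'n"
  by (rule measurable_compose[OF _ borel_measurable_continuous_onI]) (auto intro: continuous_intros)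

lemma floor_seq_tendsto: "(\<lambda>n. real_of_int \<lfloor>real (Suc n) * u\<rfloor> / real (Suc n)) \<longlonglongrightarrow> u"
proof (rule tendsto_sandwich[of "\<lambda>n. u - inverse (real (Suc n))" _ _ "\<lambda>n. u"])
  show "\<forall>\<^sub>F n in sequentially. u - inverse (real (Suc n)) \<le> real_of_int \<lfloor>real (Suc n) * u\<rfloor> / real (Suc n)"
  proof (rule always_eventually, rule allI)
    fix n
    have "real (Suc n) * u < real_of_int \<lfloor>real (Suc n) * u\<rfloor> + 1" by linarith
    then have le: "real (Suc n) * u - 1 \<le> real_of_int \<lfloor>real (Suc n) * u\<rfloor>" by linarith
    have "u - inverse (real (Suc n)) = (real (Suc n) * u - 1) / real (Suc n)"
      by (simp add: field_simps)
    also have "\<dots> \<le> real_of_int \<lfloor>real (Suc n) * u\<rfloor> / real (Suc n)"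
      by (rule divide_right_mono[OF le]) simp
    finally show "u - inverse (real (Suc n)) \<le> real_of_int \<lfloor>real (Suc n) * u\<rfloor> / real (Suc n)" .
  qed
  show "\<forall>\<^sub>F n in sequentially. real_of_int \<lfloor>real (Suc n) * u\<rfloor> / real (Suc n) \<le> u"
  proof (rule always_eventually, rule allI)
    fix n
    have le: "real_of_int \<lfloor>real (Suc n) * u\<rfloor> \<le> real (Suc n) * u" by linarith
    have "real_of_int \<lfloor>real (Suc n) * u\<rfloor> / real (Suc n) \<le> real (Suc n) * u / real (Suc n)"
      by (rule divide_right_mono[OF le]) simp
    then show "real_of_int \<lfloor>real (Suc n) * u\<rfloor> / real (Suc n) \<le> u" by simp
  qed
  show "(\<lambda>n. u - inverse (real (Suc n))) \<longlonglongrightarrow> u"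
    using tendsto_diff[OF tendsto_const LIMSEQ_inverse_real_of_nat, of u] by simp
qed simp

lemma integral_param_measurable:
  fixes \<Phi> :: "'w \<Rightarrow> real \<Rightarrow> 'v::euclidean_space"
  assumes cont: "\<And>w. w \<in> space M \<Longrightarrow> continuous_on {0..1} (\<Phi> w)"
    and meas: "\<And>u. u \<in> {0..1} \<Longrightarrow> (\<lambda>w. \<Phi> w u) \<in> borel_measurable M"
    and ab: "0 \<le> a" "b \<le> 1"
  shows "(\<lambda>w. integral {a..b} (\<Phi> w)) \<in> borel_measurable M"
proof -
  define cl where "cl u = max 0 (min 1 u)" for u :: real
  have cl01: "cl u \<in> {0..1}" for u unfolding cl_def by auto
  have cl0: "0 \<le> cl u" and cl1: "cl u \<le> 1" for u unfolding cl_def by auto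
  have clc: "continuous_on UNIV cl" unfolding cl_def by (intro continuous_intros)
  define \<Psi> where "\<Psi> = (\<lambda>x::'w \<times> real. \<Phi> (fst x) (cl (snd x)))"
  define appr where "appr n x = \<Phi> (fst x) (cl (real_of_int \<lfloor>real (Suc n) * snd x\<rfloor> / real (Suc n)))" for n and x :: "'w \<times> real"
  have joint: "\<Psi> \<in> borel_measurable (M \<Otimes>\<^sub>M lborel)"
  proof (rule borel_measurable_LIMSEQ_metric[where f = appr])
    fix n
    have g: "(\<lambda>x::'w \<times> real. \<lfloor>real (Suc n) * snd x\<rfloor>) \<in> measurable (M \<Otimes>\<^sub>M lborel) (count_space UNIV)"
      by (rule measurable_compose[OF _ measurable_real_floor]) measurable
    show "appr n \<in> borel_measurable (M \<Otimes>\<^sub>M lborel)"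
      unfolding appr_def
      by (rule measurable_compose_countable[where f = "\<lambda>i x. \<Phi> (fst x) (cl (real_of_int i / real (Suc n)))", OF _ g])
         (rule measurable_compose[OF measurable_fst meas[OF cl01]])
  next
    fix x :: "'w \<times> real" assume x: "x \<in> space (M \<Otimes>\<^sub>M lborel)"
    then have w: "fst x \<in> space M" by (auto simp: space_pair_measure)
    have "(\<lambda>n. cl (real_of_int \<lfloor>real (Suc n) * snd x\<rfloor> / real (Suc n))) \<longlonglongrightarrow> cl (snd x)"
      by (rule continuous_on_tendsto_compose[OF clc floor_seq_tendsto]) auto
    then show "(\<lambda>n. appr n x) \<longlonglongrightarrow> \<Psi> x"
      unfolding appr_def \<Psi>_def
      by (rule continuous_on_tendsto_compose[OF cont[OF w]]) (auto simp: cl0 cl1)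
  qed
  have eq: "integral {a..b} (\<Phi> w) = (\<integral>u. indicator {a..b} u *\<^sub>R \<Psi> (w, u) \<partial>lborel)"
    if w: "w \<in> space M" for w
  proof -
    have c2: "continuous_on UNIV (\<lambda>u. \<Psi> (w, u))"
      unfolding \<Psi>_def by (simp, rule continuous_on_compose2[OF cont[OF w] clc]) (auto simp: cl0 cl1)
    have si: "set_integrable lborel {a..b} (\<lambda>u. \<Psi> (w, u))"
      unfolding set_integrable_def
      by (rule borel_integrable_compact[OF compact_Icc continuous_on_subset[OF c2]]) auto
    have "integral {a..b} (\<Phi> w) = integral {a..b} (\<lambda>u. \<Psi> (w, u))"
      by (rule integral_cong) (use ab in \<open>auto simp: \<Psi>_def cl_def\<close>)
    also have "\<dots> = (LINT u:{a..b}|lborel. \<Psi> (w, u))"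
      by (rule set_borel_integral_eq_integral(2)[OF si, symmetric])
    finally show ?thesis by (simp add: set_lebesgue_integral_def)
  qed
  have "(\<lambda>w. \<integral>u. indicator {a..b} u *\<^sub>R \<Psi> (w, u) \<partial>lborel) \<in> borel_measurable M"
    by (rule lborel.borel_measurable_lebesgue_integral) (use joint in measurable)
  then show ?thesis
    by (rule measurable_cong[THEN iffD2, rotated]) (simp add: eq)
qed

lemma iint_measurable:
  fixes phi :: "'w \<Rightarrow> real \<Rightarrow> 'v::euclidean_space" and p :: "'w \<Rightarrow> real \<Rightarrow> real \<times> (real^'d)"
  assumes r0: "r 0 = 0" and rm: "r m = (1::real)" and rmono: "strict_mono_on {..m} r"
    and cont: "\<And>w. w \<in> space M \<Longrightarrow> continuous_on {0..1} (phi w)"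
    and meas: "\<And>u. u \<in> {0..1} \<Longrightarrow> (\<lambda>w. phi w u) \<in> borel_measurable M"
    and pm: "\<And>i. i \<le> m \<Longrightarrow> (\<lambda>w. p w (r i)) \<in> borel_measurable M"
  shows "s \<in> {0..1} \<Longrightarrow> (\<lambda>w. iint (phi w) (pl_deriv r m (p w)) be ks s) \<in> borel_measurable M"
proof (induction be arbitrary: ks s)
  case Nil then show ?case using meas by simp
next
  case (Cons a be)
  note rf = r_facts[OF r0 rm rmono]
  have im: "(\<lambda>w. integral {r i..min (r (Suc i)) s} (iint (phi w) (pl_deriv r m (p w)) be ks')) \<in> borel_measurable M"
    if i: "i < m" for i ks'
    by (rule integral_param_measurable[OF iint_cont[OF r0 rm rmono cont] Cons.IH])
       (use rf i Cons.prems in auto)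
  have cT: "(\<lambda>w. (fst (p w (r (Suc i))) - fst (p w (r i))) / (r (Suc i) - r i)) \<in> borel_measurable M"
    if "i < m" for i
  proof -
    have [measurable]: "(\<lambda>w. p w (r i)) \<in> borel_measurable M" "(\<lambda>w. p w (r (Suc i))) \<in> borel_measurable M"
      using pm that by auto
    note m = this
    show ?thesis
      by (intro borel_measurable_divide borel_measurable_const borel_measurable_diff meas_fst m)
  qed
  have cW: "(\<lambda>w. (snd (p w (r (Suc i))) - snd (p w (r i))) $ k / (r (Suc i) - r i)) \<in> borel_measurable M"
    if "i < m" for i k
  proof -
    have [measurable]: "(\<lambda>w. p w (r i)) \<in> borel_measurable M" "(\<lambda>w. p w (r (Suc i))) \<in> borel_measurable M"
      using pm that by auto
    note m = this
    show ?thesis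
      by (intro borel_measurable_divide borel_measurable_const meas_nth borel_measurable_diff meas_snd m)
  qed
  show ?case
  proof (cases a)
    case Tau
    have "(\<lambda>w. \<Sum>i<m. ((fst (p w (r (Suc i))) - fst (p w (r i))) / (r (Suc i) - r i)) *\<^sub>R
        integral {r i..min (r (Suc i)) s} (iint (phi w) (pl_deriv r m (p w)) be ks)) \<in> borel_measurable M"
    proof (rule borel_measurable_sum)
      fix i assume "i \<in> {..<m}"
      then show "(\<lambda>w. ((fst (p w (r (Suc i))) - fst (p w (r i))) / (r (Suc i) - r i)) *\<^sub>R
        integral {r i..min (r (Suc i)) s} (iint (phi w) (pl_deriv r m (p w)) be ks)) \<in> borel_measurable M"
        by (intro borel_measurable_scaleR cT im) auto
    qed
    then show ?thesis unfolding Tau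
      by (rule measurable_cong[THEN iffD2, rotated])
         (rule iint_Tau_rep[OF r0 rm rmono iint_cont[OF r0 rm rmono cont] Cons.prems]; assumption)
  next
    case Omega
    have "(\<lambda>w. \<Sum>i<m. ((snd (p w (r (Suc i))) - snd (p w (r i))) $ last ks / (r (Suc i) - r i)) *\<^sub>R
        integral {r i..min (r (Suc i)) s} (iint (phi w) (pl_deriv r m (p w)) be (butlast ks))) \<in> borel_measurable M"
    proof (rule borel_measurable_sum)
      fix i assume "i \<in> {..<m}"
      then show "(\<lambda>w. ((snd (p w (r (Suc i))) - snd (p w (r i))) $ last ks / (r (Suc i) - r i)) *\<^sub>R
        integral {r i..min (r (Suc i)) s} (iint (phi w) (pl_deriv r m (p w)) be (butlast ks))) \<in> borel_measurable M"
        by (intro borel_measurable_scaleR cW im) auto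
    qed
    then show ?thesis unfolding Omega
      by (rule measurable_cong[THEN iffD2, rotated])
         (rule iint_Omega_rep[OF r0 rm rmono iint_cont[OF r0 rm rmono cont] Cons.prems]; assumption)
  qed
qed

lemma sqrt2_ineq:
  fixes x :: real assumes x: "0 \<le> x"
  shows "x * (1 + x) \<le> sqrt 2 * (1 + x\<^sup>2)"
proof -
  have s: "1.4 \<le> sqrt 2" by (rule real_le_rsqrt) (simp add: power2_eq_square)
  have "x * (1 + x) \<le> 1.4 * (1 + x\<^sup>2)"
  proof -
    have e: "1.4 * (1 + x\<^sup>2) - x * (1 + x) = 2/5 * (x - 5/4)\<^sup>2 + 31/40"
      by (simp add: power2_eq_square algebra_simps)
    have "0 \<le> 2/5 * (x - 5/4)\<^sup>2" by simp
    with e show ?thesis by linarith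
  qed
  also have "\<dots> \<le> sqrt 2 * (1 + x\<^sup>2)"
    by (rule mult_right_mono[OF s]) simp
  finally show ?thesis .
qed

lemma gron_piece:
  fixes Y :: "real \<Rightarrow> 'a::real_inner"
  assumes ab: "a < b"
    and der: "\<And>u. u \<in> {a..b} \<Longrightarrow> (Y has_vector_derivative Yd u) (at u within {a..b})"
    and bd: "\<And>u. u \<in> {a..b} \<Longrightarrow> norm (Yd u) \<le> \<kappa> * (1 + norm (Y u))"
    and k0: "0 \<le> \<kappa>"
    and u: "u \<in> {a..b}"
  shows "1 + (norm (Y u))\<^sup>2 \<le> (1 + (norm (Y a))\<^sup>2) * exp (2 * sqrt 2 * \<kappa> * (u - a))"
proof -
  define c where "c = 2 * sqrt 2 * \<kappa>"
  define \<phi> where "\<phi> t = (1 + Y t \<bullet> Y t) * exp (- c * (t - a))" for t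
  have contY: "continuous_on {a..b} Y"
    using der by (auto simp: continuous_on_eq_continuous_within intro!: has_vector_derivative_continuous der)
  have "\<phi> u \<le> \<phi> a"
  proof (rule DERIV_nonpos_imp_decreasing_open[of a u \<phi>])
    show "a \<le> u" using u by simp
    show "continuous_on {a..u} \<phi>"
      unfolding \<phi>_def using u
      by (intro continuous_intros continuous_on_subset[OF contY]) auto
    fix x assume x: "a < x" "x < u"
    then have xab: "x \<in> {a..b}" "a < x" "x < b" using u by auto
    have dY: "(Y has_derivative (\<lambda>h. h *\<^sub>R Yd x)) (at x)"
      using der[OF xab(1)] at_within_Icc_at[OF xab(2,3)] by (simp add: has_vector_derivative_def)
    have d1: "((\<lambda>t. Y t \<bullet> Y t) has_real_derivative 2 * (Y x \<bullet> Yd x)) (at x)"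
      unfolding has_field_derivative_def
      by (rule has_derivative_eq_rhs[OF has_derivative_inner[OF dY dY]])
         (auto simp: fun_eq_iff inner_commute algebra_simps)
    have d2: "(\<phi> has_real_derivative
        (2 * (Y x \<bullet> Yd x)) * exp (- c * (x - a)) + (1 + Y x \<bullet> Y x) * (exp (- c * (x - a)) * (- c))) (at x)"
    proof -
      have d3: "((\<lambda>t. exp (- c * (t - a))) has_real_derivative exp (- c * (x - a)) * (- c)) (at x)"
        by (auto intro!: derivative_eq_intros)
      have d4: "((\<lambda>t. 1 + Y t \<bullet> Y t) has_real_derivative 2 * (Y x \<bullet> Yd x)) (at x)"
        using DERIV_add[OF DERIV_const d1] by simp
      show ?thesis unfolding \<phi>_def by (rule DERIV_cong[OF DERIV_mult[OF d4 d3]]) (simp add: algebra_simps)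
    qed
    have "Y x \<bullet> Yd x \<le> norm (Y x) * norm (Yd x)" by (rule norm_cauchy_schwarz)
    also have "\<dots> \<le> norm (Y x) * (\<kappa> * (1 + norm (Y x)))"
      by (rule mult_left_mono[OF bd[OF xab(1)]]) simp
    also have "\<dots> = \<kappa> * (norm (Y x) * (1 + norm (Y x)))" by simp
    also have "\<dots> \<le> \<kappa> * (sqrt 2 * (1 + (norm (Y x))\<^sup>2))"
      by (rule mult_left_mono[OF sqrt2_ineq k0]) simp
    finally have "2 * (Y x \<bullet> Yd x) \<le> c * (1 + Y x \<bullet> Y x)"
      by (simp add: c_def dot_square_norm algebra_simps)
    then have le0: "exp (- c * (x - a)) * (2 * (Y x \<bullet> Yd x) - c * (1 + Y x \<bullet> Y x)) \<le> 0"
      by (intro mult_nonneg_nonpos) auto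
    have "(2 * (Y x \<bullet> Yd x)) * exp (- c * (x - a)) + (1 + Y x \<bullet> Y x) * (exp (- c * (x - a)) * (- c))
        = exp (- c * (x - a)) * (2 * (Y x \<bullet> Yd x) - c * (1 + Y x \<bullet> Y x))"
      by (simp add: algebra_simps)
    with le0 have "(2 * (Y x \<bullet> Yd x)) * exp (- c * (x - a)) + (1 + Y x \<bullet> Y x) * (exp (- c * (x - a)) * (- c)) \<le> 0"
      by simp
    with d2 show "\<exists>y. (\<phi> has_real_derivative y) (at x) \<and> y \<le> 0" by blast
  qed
  then have "(1 + (norm (Y u))\<^sup>2) * exp (- c * (u - a)) \<le> 1 + (norm (Y a))\<^sup>2"
    by (simp add: \<phi>_def dot_square_norm)
  then have "(1 + (norm (Y u))\<^sup>2) * exp (- c * (u - a)) * exp (c * (u - a)) \<le> (1 + (norm (Y a))\<^sup>2) * exp (c * (u - a))"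
    by (rule mult_right_mono) simp
  then show ?thesis by (simp add: c_def mult.assoc flip: exp_add)
qed

lemma gron_chain:
  fixes Y :: "real \<Rightarrow> 'a::real_inner" and Yd :: "nat \<Rightarrow> real \<Rightarrow> 'a" and k :: "nat \<Rightarrow> real"
  assumes r0: "r 0 = 0" and rm: "r m = (1::real)" and rmono: "strict_mono_on {..m} r"
    and der: "\<And>i u. i < m \<Longrightarrow> u \<in> {r i..r (Suc i)} \<Longrightarrow> (Y has_vector_derivative Yd i u) (at u within {r i..r (Suc i)})"
    and bd: "\<And>i u. i < m \<Longrightarrow> u \<in> {r i..r (Suc i)} \<Longrightarrow> norm (Yd i u) \<le> k i / (r (Suc i) - r i) * (1 + norm (Y u))"
    and k0: "\<And>i. 0 \<le> k i"
    and u: "u \<in> {0..1}"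
  shows "norm (Y u - Y 0) \<le> sqrt 2 * (\<Sum>i<m. k i) * (1 + norm (Y 0)) * exp (sqrt 2 * (\<Sum>i<m. k i))"
proof -
  note rf = r_facts[OF r0 rm rmono]
  define K where "K = (\<Sum>i<m. k i)"
  define Q0 where "Q0 = 1 + (norm (Y 0))\<^sup>2"
  have Q0: "0 \<le> Q0" unfolding Q0_def by simp
  have psum: "(\<Sum>i<Suc j. k i) \<le> K" if "j < m" for j
    unfolding K_def by (rule sum_mono2) (use that k0 in auto)
  have piece: "1 + (norm (Y v))\<^sup>2 \<le> (1 + (norm (Y (r i)))\<^sup>2) * exp (2 * sqrt 2 * k i)"
    if i: "i < m" and v: "v \<in> {r i..r (Suc i)}" for i v
  proof -
    have dpos: "0 < r (Suc i) - r i" using rf(3)[OF i] by simp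
    have "1 + (norm (Y v))\<^sup>2 \<le> (1 + (norm (Y (r i)))\<^sup>2) * exp (2 * sqrt 2 * (k i / (r (Suc i) - r i)) * (v - r i))"
      by (rule gron_piece[OF rf(3)[OF i] der[OF i] bd[OF i] _ v])
         (use k0 dpos in \<open>auto intro: divide_nonneg_pos\<close>)
    also have "\<dots> \<le> (1 + (norm (Y (r i)))\<^sup>2) * exp (2 * sqrt 2 * k i)"
    proof (rule mult_left_mono)
      have "k i / (r (Suc i) - r i) * (v - r i) \<le> k i / (r (Suc i) - r i) * (r (Suc i) - r i)"
        by (rule mult_left_mono) (use v k0 dpos in auto)
      also have "\<dots> = k i" using dpos by simp
      finally have h: "k i / (r (Suc i) - r i) * (v - r i) \<le> k i" .
      have "2 * sqrt 2 * (k i / (r (Suc i) - r i)) * (v - r i) = 2 * sqrt 2 * (k i / (r (Suc i) - r i) * (v - r i))"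
        by (simp only: mult.assoc)
      also have "\<dots> \<le> 2 * sqrt 2 * k i" by (rule mult_left_mono[OF h]) simp
      finally have "2 * sqrt 2 * (k i / (r (Suc i) - r i)) * (v - r i) \<le> 2 * sqrt 2 * k i" .
      then show "exp (2 * sqrt 2 * (k i / (r (Suc i) - r i)) * (v - r i)) \<le> exp (2 * sqrt 2 * k i)" by simp
    qed simp
    finally show ?thesis .
  qed
  have nodes: "1 + (norm (Y (r j)))\<^sup>2 \<le> Q0 * exp (2 * sqrt 2 * (\<Sum>i<j. k i))" if "j \<le> m" for j
    using that
  proof (induction j)
    case 0 then show ?case by (simp add: Q0_def r0)
  next
    case (Suc j)
    then have j: "j < m" by simp
    have "1 + (norm (Y (r (Suc j))))\<^sup>2 \<le> (1 + (norm (Y (r j)))\<^sup>2) * exp (2 * sqrt 2 * k j)"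
      by (rule piece[OF j]) (use rf(3)[OF j] in auto)
    also have "\<dots> \<le> Q0 * exp (2 * sqrt 2 * (\<Sum>i<j. k i)) * exp (2 * sqrt 2 * k j)"
      by (rule mult_right_mono) (use Suc in auto)
    also have "\<dots> = Q0 * exp (2 * sqrt 2 * (\<Sum>i<Suc j. k i))"
      by (simp add: mult.assoc distrib_left flip: exp_add)
    finally show ?case .
  qed
  have allq: "1 + (norm (Y v))\<^sup>2 \<le> Q0 * exp (2 * sqrt 2 * K)" if v: "v \<in> {0..1}" for v
  proof -
    obtain i where i: "i < m" "v \<in> {r i..r (Suc i)}" using r_cover[OF r0 rm rmono v] by blast
    have "1 + (norm (Y v))\<^sup>2 \<le> (1 + (norm (Y (r i)))\<^sup>2) * exp (2 * sqrt 2 * k i)" by (rule piece[OF i])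
    also have "\<dots> \<le> Q0 * exp (2 * sqrt 2 * (\<Sum>i<i. k i)) * exp (2 * sqrt 2 * k i)"
      by (rule mult_right_mono) (use nodes i in auto)
    also have "\<dots> = Q0 * exp (2 * sqrt 2 * (\<Sum>i<Suc i. k i))"
      by (simp add: mult.assoc distrib_left flip: exp_add)
    also have "\<dots> \<le> Q0 * exp (2 * sqrt 2 * K)"
      by (rule mult_left_mono[OF _ Q0]) (use psum[OF i(1)] in simp)
    finally show ?thesis .
  qed
  define E where "E = sqrt 2 * (1 + norm (Y 0)) * exp (sqrt 2 * K)"
  have E0: "0 \<le> E" unfolding E_def by simp
  have onep: "1 + norm (Y v) \<le> E" if v: "v \<in> {0..1}" for v
  proof -
    have "(1 + norm (Y v))\<^sup>2 \<le> 2 * (1 + (norm (Y v))\<^sup>2)"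
      using sum_squares_bound[of 1 "norm (Y v)"] by (simp add: power2_eq_square algebra_simps)
    also have "\<dots> \<le> 2 * (Q0 * exp (2 * sqrt 2 * K))" using allq[OF v] by simp
    also have "\<dots> \<le> 2 * ((1 + norm (Y 0))\<^sup>2 * exp (2 * sqrt 2 * K))"
      unfolding Q0_def by (intro mult_left_mono mult_right_mono) (auto simp: power2_eq_square algebra_simps)
    also have "\<dots> = E\<^sup>2"
      unfolding E_def by (simp add: power_mult_distrib power2_eq_square mult_ac flip: exp_add)
    finally show ?thesis using E0 by (rule power2_le_imp_le)
  qed
  have pdiff: "norm (Y v - Y (r i)) \<le> k i * E" if i: "i < m" and v: "v \<in> {r i..r (Suc i)}" for i v
  proof (cases "v = r i")
    case True then show ?thesis using k0 E0 by simp
  next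
    case False
    then have lt: "r i < v" using v by auto
    have dpos: "0 < r (Suc i) - r i" using rf(3)[OF i] by simp
    have contY0: "continuous_on {r i..r (Suc i)} Y"
      unfolding continuous_on_eq_continuous_within
      using has_vector_derivative_continuous[OF der[OF i]] by blast
    have contY: "continuous_on {r i..v} Y"
      by (rule continuous_on_subset[OF contY0]) (use v in auto)
    obtain x where x: "x \<in> {r i<..<v}" "norm (Y v - Y (r i)) \<le> norm ((v - r i) *\<^sub>R Yd i x)"
      using mvt_general[OF lt contY, of "\<lambda>x h. h *\<^sub>R Yd i x"]
    proof -
      have "\<And>x. r i < x \<Longrightarrow> x < v \<Longrightarrow> (Y has_derivative (\<lambda>h. h *\<^sub>R Yd i x)) (at x)"
      proof -
        fix x assume "r i < x" "x < v"
        then have "x \<in> {r i..r (Suc i)}" "r i < x" "x < r (Suc i)" using v by auto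
        then show "(Y has_derivative (\<lambda>h. h *\<^sub>R Yd i x)) (at x)"
          using der[OF i] at_within_Icc_at by (metis has_vector_derivative_def)
      qed
      then show ?thesis using mvt_general[OF lt contY, of "\<lambda>x h. h *\<^sub>R Yd i x"] that by blast
    qed
    have xin: "x \<in> {r i..r (Suc i)}" using x v by auto
    have "norm (Y v - Y (r i)) \<le> (v - r i) * norm (Yd i x)" using x lt by simp
    also have "\<dots> \<le> (r (Suc i) - r i) * (k i / (r (Suc i) - r i) * E)"
    proof (rule mult_mono)
      show "norm (Yd i x) \<le> k i / (r (Suc i) - r i) * E"
        using bd[OF i xin] mult_left_mono[OF onep[of x], of "k i / (r (Suc i) - r i)"]
          k0[of i] dpos xin rf(1)[of i] rf(2)[of "Suc i"] i
        by (auto intro: order_trans)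
    qed (use v dpos in auto)
    also have "\<dots> = k i * E" using dpos by simp
    finally show ?thesis .
  qed
  have nodes2: "norm (Y (r j) - Y 0) \<le> E * (\<Sum>i<j. k i)" if "j \<le> m" for j
    using that
  proof (induction j)
    case 0 then show ?case by (simp add: r0)
  next
    case (Suc j)
    then have j: "j < m" by simp
    have "norm (Y (r (Suc j)) - Y 0) \<le> norm (Y (r (Suc j)) - Y (r j)) + norm (Y (r j) - Y 0)"
      using norm_triangle_ineq[of "Y (r (Suc j)) - Y (r j)" "Y (r j) - Y 0"] by simp
    also have "\<dots> \<le> k j * E + E * (\<Sum>i<j. k i)"
      by (intro add_mono pdiff[OF j]) (use Suc rf(3)[OF j] in auto)
    finally show ?case by (simp add: algebra_simps)
  qed
  obtain i where i: "i < m" "u \<in> {r i..r (Suc i)}" using r_cover[OF r0 rm rmono u] by blast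
  have "norm (Y u - Y 0) \<le> norm (Y u - Y (r i)) + norm (Y (r i) - Y 0)"
    using norm_triangle_ineq[of "Y u - Y (r i)" "Y (r i) - Y 0"] by simp
  also have "\<dots> \<le> k i * E + E * (\<Sum>i<i. k i)"
    by (intro add_mono pdiff[OF i] nodes2) (use i in auto)
  also have "\<dots> = E * (\<Sum>i<Suc i. k i)" by (simp add: algebra_simps)
  also have "\<dots> \<le> E * K" by (rule mult_left_mono[OF psum[OF i(1)] E0])
  finally show ?thesis by (simp add: E_def K_def mult_ac)
qed

lemma pair_sum_le: "\<bar>fst z\<bar> + norm (snd z) \<le> sqrt 2 * norm (z :: real \<times> 'b::real_normed_vector)"
proof -
  obtain a b where z: "z = (a, b)" by (cases z)
  have "(\<bar>a\<bar> + norm b)\<^sup>2 \<le> 2 * (a\<^sup>2 + (norm b)\<^sup>2)"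
    using sum_squares_bound[of "\<bar>a\<bar>" "norm b"] by (simp add: power2_eq_square algebra_simps)
  also have "\<dots> = (sqrt 2 * norm (a, b))\<^sup>2"
    by (simp add: norm_Pair power_mult_distrib)
  finally show ?thesis unfolding z using power2_le_imp_le by force
qed

lemma y_props:
  fixes Y :: "real \<Rightarrow> real^'e" and p :: "real \<Rightarrow> real \<times> (real^'d)"
    and f :: "real^'e \<Rightarrow> real^'e" and g :: "real^'e \<Rightarrow> real^'d^'e"
  assumes r0: "r 0 = 0" and rm: "r m = (1::real)" and rmono: "strict_mono_on {..m} r"
    and ode: "\<And>i u. i < m \<Longrightarrow> u \<in> {r i..r (Suc i)} \<Longrightarrow>
          (Y has_vector_derivative
             (let D = (1 / (r (Suc i) - r i)) *\<^sub>R (p (r (Suc i)) - p (r i))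
              in fst D *\<^sub>R f (Y u) + g (Y u) *v snd D))
          (at u within {r i..r (Suc i)})"
    and fgr: "\<And>z. norm (f z) \<le> C * (1 + norm z)"
    and ggr: "\<And>z. norm (g z) \<le> C * (1 + norm z)"
  shows "continuous_on {0..1} Y"
    and "\<And>u. u \<in> {0..1} \<Longrightarrow> norm (Y u - Y 0) \<le>
            2 * C * pl_length r m p * (1 + norm (Y 0)) * exp (2 * C * pl_length r m p)"
proof -
  note rf = r_facts[OF r0 rm rmono]
  have "norm (f 0) \<le> C" using fgr[of 0] by simp
  then have C0: "0 \<le> C" by (meson norm_ge_zero order_trans)
  define Yd where "Yd i u = (let D = (1 / (r (Suc i) - r i)) *\<^sub>R (p (r (Suc i)) - p (r i))
              in fst D *\<^sub>R f (Y u) + g (Y u) *v snd D)" for i u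
  have der: "\<And>i u. i < m \<Longrightarrow> u \<in> {r i..r (Suc i)} \<Longrightarrow> (Y has_vector_derivative Yd i u) (at u within {r i..r (Suc i)})"
    unfolding Yd_def by (rule ode)
  have cpiece: "continuous_on {r i..r (Suc i)} Y" if "i < m" for i
    unfolding continuous_on_eq_continuous_within
    using has_vector_derivative_continuous[OF der[OF that]] by blast
  have "(\<Union>i\<in>{..<m}. {r i..r (Suc i)}) = {0..1}"
  proof
    show "(\<Union>i\<in>{..<m}. {r i..r (Suc i)}) \<subseteq> {0..1}"
    proof (intro subsetI)
      fix x assume "x \<in> (\<Union>i\<in>{..<m}. {r i..r (Suc i)})"
      then obtain i where "i < m" "r i \<le> x" "x \<le> r (Suc i)" by auto
      moreover have "0 \<le> r i" "r (Suc i) \<le> 1" using rf(1)[of i] rf(2)[of "Suc i"] \<open>i < m\<close> by auto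
      ultimately show "x \<in> {0..1}" by auto
    qed
    show "{0..1} \<subseteq> (\<Union>i\<in>{..<m}. {r i..r (Suc i)})"
      using r_cover[OF r0 rm rmono] by blast
  qed
  moreover have "continuous_on (\<Union>i\<in>{..<m}. {r i..r (Suc i)}) Y"
    by (rule continuous_on_closed_Union) (auto intro: cpiece)
  ultimately show "continuous_on {0..1} Y" by simp
  define k where "k i = sqrt 2 * C * norm (p (r (Suc i)) - p (r i))" for i
  have bd: "norm (Yd i u) \<le> k i / (r (Suc i) - r i) * (1 + norm (Y u))"
    if i: "i < m" and u: "u \<in> {r i..r (Suc i)}" for i u
  proof -
    define D where "D = (1 / (r (Suc i) - r i)) *\<^sub>R (p (r (Suc i)) - p (r i))"
    have dpos: "0 < r (Suc i) - r i" using rf(3)[OF i] by simp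
    have "norm (Yd i u) \<le> norm (fst D *\<^sub>R f (Y u)) + norm (g (Y u) *v snd D)"
      unfolding Yd_def D_def[symmetric] Let_def by (rule norm_triangle_ineq)
    also have "\<dots> \<le> \<bar>fst D\<bar> * (C * (1 + norm (Y u))) + C * (1 + norm (Y u)) * norm (snd D)"
      by (intro add_mono order_trans[OF matvec_norm_le] mult_right_mono ggr)
         (auto intro: mult_left_mono fgr)
    also have "\<dots> = C * (1 + norm (Y u)) * (\<bar>fst D\<bar> + norm (snd D))" by (simp add: algebra_simps)
    also have "\<dots> \<le> C * (1 + norm (Y u)) * (sqrt 2 * norm D)"
      by (rule mult_left_mono[OF pair_sum_le]) (use C0 in simp)
    also have "norm D = norm (p (r (Suc i)) - p (r i)) / (r (Suc i) - r i)"
      unfolding D_def using dpos by simp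
    finally show ?thesis unfolding k_def by (simp add: field_simps)
  qed
  have k0: "0 \<le> k i" for i unfolding k_def using C0 by simp
  have sk: "(\<Sum>i<m. k i) = sqrt 2 * C * pl_length r m p"
    unfolding k_def pl_length_def by (simp add: sum_distrib_left)
  fix u :: real assume u: "u \<in> {0..1}"
  have "norm (Y u - Y 0) \<le> sqrt 2 * (\<Sum>i<m. k i) * (1 + norm (Y 0)) * exp (sqrt 2 * (\<Sum>i<m. k i))"
    by (rule gron_chain[OF r0 rm rmono der bd k0 u])
  also have "\<dots> = 2 * C * pl_length r m p * (1 + norm (Y 0)) * exp (2 * C * pl_length r m p)"
    unfolding sk by (simp add: mult.assoc[symmetric])
  finally show "norm (Y u - Y 0) \<le> 2 * C * pl_length r m p * (1 + norm (Y 0)) * exp (2 * C * pl_length r m p)" .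
qed

lemma cnt_rev: "cnt a (rev al) = cnt a al"
  by (simp add: cnt_def rev_filter[symmetric])

lemma J_F_bound:
  fixes Y :: "real \<Rightarrow> real^'e" and p :: "real \<Rightarrow> real \<times> (real^'d)" and F :: "real^'e \<Rightarrow> 'v::euclidean_space"
  assumes r0: "r 0 = 0" and rm: "r m = (1::real)" and rmono: "strict_mono_on {..m} r"
    and contY: "continuous_on {0..1} Y"
    and Lip: "L-lipschitz_on UNIV F"
    and Yb: "\<And>u. u \<in> {0..1} \<Longrightarrow> norm (Y u - Y 0) \<le> Bd"
  shows "norm (J_F r m p Y F al ks) \<le> L * Bd * VT r m p ^ cnt Tau al * VW r m p ^ cnt Omega al"
proof -
  have contF: "continuous_on UNIV F" by (rule lipschitz_on_continuous_on[OF Lip])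
  have c1: "continuous_on {0..1} (\<lambda>u. F (Y u))"
    by (rule continuous_on_compose2[OF contF contY]) auto
  have c2: "continuous_on {0..1} (\<lambda>u::real. 1::real)" by simp
  have L0: "0 \<le> L" using Lip by (simp add: lipschitz_on_def)
  have "J_F r m p Y F al ks = iint (\<lambda>u. F (Y u) - 1 *\<^sub>R F (Y 0)) (pl_deriv r m p) (rev al) ks 1"
    unfolding J_F_def I_F_def I_one_def
    by (rule iint_lin[OF r0 rm rmono c1 c2, symmetric]) simp
  also have "norm \<dots> \<le> (L * Bd) * VT r m p ^ cnt Tau (rev al) * VW r m p ^ cnt Omega (rev al)"
  proof (rule iint_bound[OF r0 rm rmono])
    show "continuous_on {0..1} (\<lambda>u. F (Y u) - 1 *\<^sub>R F (Y 0))" using c1 by (intro continuous_intros) auto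
    fix u :: real assume u: "u \<in> {0..1}"
    have "norm (F (Y u) - 1 *\<^sub>R F (Y 0)) = dist (F (Y u)) (F (Y 0))" by (simp add: dist_norm)
    also have "\<dots> \<le> L * dist (Y u) (Y 0)" using Lip by (simp add: lipschitz_on_def)
    also have "\<dots> \<le> L * Bd" using Yb[OF u] L0 by (simp add: dist_norm mult_left_mono)
    finally show "norm (F (Y u) - 1 *\<^sub>R F (Y 0)) \<le> L * Bd" .
  qed simp
  finally show ?thesis by (simp add: cnt_rev)
qed

lemma young3:
  fixes a b c l u :: real
  assumes "0 \<le> a" "0 \<le> b" "0 \<le> c" "0 < l" "0 < u"
  shows "a * b * c \<le> l * a\<^sup>2 / 2 + u * b ^ 4 / (4 * l) + c ^ 4 / (4 * l * u)"
proof -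
  have 1: "a * (b * c) \<le> l * a\<^sup>2 / 2 + (b * c)\<^sup>2 / (2 * l)"
  proof -
    have "0 \<le> (l * a - b * c)\<^sup>2 / (2 * l)" using assms by simp
    also have "(l * a - b * c)\<^sup>2 / (2 * l) = l * a\<^sup>2 / 2 + (b * c)\<^sup>2 / (2 * l) - a * (b * c)"
      using assms by (simp add: power2_eq_square field_simps)
    finally show ?thesis by simp
  qed
  have 2: "(b * c)\<^sup>2 \<le> u * b ^ 4 / 2 + c ^ 4 / (2 * u)"
  proof -
    have "0 \<le> (u * b\<^sup>2 - c\<^sup>2)\<^sup>2 / (2 * u)" using assms by simp
    also have "(u * b\<^sup>2 - c\<^sup>2)\<^sup>2 / (2 * u) = u * b ^ 4 / 2 + c ^ 4 / (2 * u) - (b * c)\<^sup>2"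
      using assms by (simp add: power2_eq_square field_simps power4_eq_xxxx)
    finally show ?thesis by simp
  qed
  have "(b * c)\<^sup>2 / (2 * l) \<le> (u * b ^ 4 / 2 + c ^ 4 / (2 * u)) / (2 * l)"
    by (rule divide_right_mono[OF 2]) (use assms in simp)
  also have "\<dots> = u * b ^ 4 / (4 * l) + c ^ 4 / (4 * l * u)"
    using assms by (simp add: field_simps)
  finally show ?thesis using 1 by (simp add: mult.assoc)
qed

lemma sum_pow_le:
  fixes x :: "'a \<Rightarrow> real"
  assumes "finite A" "\<And>a. a \<in> A \<Longrightarrow> 0 \<le> x a" and False: "A \<noteq> {}"
  shows "(\<Sum>a\<in>A. x a) ^ p \<le> real (card A) ^ p * (\<Sum>a\<in>A. x a ^ p)"
proof -
  have fin: "finite (x ` A)" using assms(1) by simp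
  have ne: "x ` A \<noteq> {}" using False by simp
  obtain a0 where a0A: "a0 \<in> A" and a0M: "x a0 = Max (x ` A)" using Max_in[OF fin ne] by auto
  have a0: "a0 \<in> A" "\<And>a. a \<in> A \<Longrightarrow> x a \<le> x a0"
    using a0A a0M Max_ge[OF fin] by auto
  have "(\<Sum>a\<in>A. x a) \<le> real (card A) * x a0"
    using sum_bounded_above[of A x "x a0"] a0 by simp
  then have "(\<Sum>a\<in>A. x a) ^ p \<le> (real (card A) * x a0) ^ p"
    by (rule power_mono) (simp add: assms sum_nonneg)
  also have "\<dots> = real (card A) ^ p * x a0 ^ p" by (simp add: power_mult_distrib)
  also have "\<dots> \<le> real (card A) ^ p * (\<Sum>a\<in>A. x a ^ p)"
    by (rule mult_left_mono[OF member_le_sum]) (use a0 assms in auto)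
  finally show ?thesis .
qed

lemma add_pow_le:
  fixes a b :: real assumes "0 \<le> a" "0 \<le> b"
  shows "(a + b) ^ p \<le> 2 ^ p * (a ^ p + b ^ p)"
  using sum_pow_le[of "{True, False}" "\<lambda>t. if t then a else b" p] assms by simp

lemma one_plus_pow4:
  fixes x :: real assumes "0 \<le> x"
  shows "(1 + x) ^ 4 \<le> 16 * (1 + x ^ 4)"
proof (cases "x \<le> 1")
  case True
  have "(1 + x) ^ 4 \<le> 2 ^ 4" by (rule power_mono) (use True assms in auto)
  then have a: "(1 + x) ^ 4 \<le> 16" by simp
  have b: "0 \<le> x ^ 4" using assms by simp
  have "16 \<le> 16 * (1 + x ^ 4)" using b by simp
  with a show ?thesis by linarith
next
  case False
  have "(1 + x) ^ 4 \<le> (2 * x) ^ 4" by (rule power_mono) (use False in auto)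
  then show ?thesis by (simp add: power_mult_distrib)
qed

lemma alg_bound:
  fixes h T cT A Ex Bx X Sc K1 M0 :: real and nT b :: nat
  assumes h: "0 < h" "h \<le> 1" and T: "0 \<le> T" "T \<le> cT * h" and Ex: "0 \<le> Ex" "Ex \<le> Bx"
    and A: "0 \<le> A" and K1: "0 \<le> K1" and X: "0 \<le> X" "X \<le> Sc * h ^ (4 * b)" and M0: "0 \<le> M0"
  shows "K1 * T ^ (2 * nT) * (h ^ b / 2 * 16 * A + h ^ (2 * b) / (4 * h ^ b) * Ex
           + 1 / (4 * h ^ b * h ^ (2 * b)) * 2 ^ (8 * b) * (T ^ (8 * b) + M0 * X))
       \<le> (K1 * cT ^ (2 * nT) * (8 * A + Bx / 4 + 2 ^ (8 * b) * (cT ^ (8 * b) + M0 * Sc) / 4)) * h ^ (2 * nT + b)"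
proof -
  have cT: "0 \<le> cT" using T h by (metis less_le_not_le mult_nonneg_nonneg mult_nonpos_nonneg order_trans zero_le_mult_iff)
  have hb: "0 < h ^ b" using h by simp
  have t1: "h ^ b / 2 * 16 * A = h ^ b * (8 * A)" by simp
  have t2: "h ^ (2 * b) / (4 * h ^ b) * Ex \<le> h ^ b * (Bx / 4)"
  proof -
    have e: "h ^ (2 * b) / (4 * h ^ b) = h ^ b / 4" using hb by (simp add: mult_2 power_add)
    have "h ^ (2 * b) / (4 * h ^ b) * Ex = h ^ b / 4 * Ex" by (simp only: e)
    also have "\<dots> \<le> h ^ b / 4 * Bx" by (rule mult_left_mono[OF Ex(2)]) (use hb in simp)
    also have "\<dots> = h ^ b * (Bx / 4)" by simp
    finally show ?thesis .
  qed
  have Tp: "T ^ (8 * b) \<le> cT ^ (8 * b) * h ^ (4 * b)"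
  proof -
    have "T ^ (8 * b) \<le> (cT * h) ^ (8 * b)" by (rule power_mono[OF T(2) T(1)])
    also have "\<dots> = cT ^ (8 * b) * (h ^ (4 * b) * h ^ (4 * b))"
      by (simp add: power_mult_distrib flip: power_add)
    also have "\<dots> \<le> cT ^ (8 * b) * (h ^ (4 * b) * 1)"
      by (intro mult_left_mono power_le_one) (use h cT in auto)
    finally show ?thesis by simp
  qed
  have t3: "1 / (4 * h ^ b * h ^ (2 * b)) * 2 ^ (8 * b) * (T ^ (8 * b) + M0 * X)
      \<le> h ^ b * (2 ^ (8 * b) * (cT ^ (8 * b) + M0 * Sc) / 4)"
  proof -
    have "T ^ (8 * b) + M0 * X \<le> cT ^ (8 * b) * h ^ (4 * b) + M0 * (Sc * h ^ (4 * b))"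
      by (intro add_mono Tp mult_left_mono X M0)
    also have "\<dots> = (cT ^ (8 * b) + M0 * Sc) * h ^ (4 * b)" by (simp add: algebra_simps)
    finally have le: "T ^ (8 * b) + M0 * X \<le> (cT ^ (8 * b) + M0 * Sc) * h ^ (4 * b)" .
    have "1 / (4 * h ^ b * h ^ (2 * b)) * 2 ^ (8 * b) * (T ^ (8 * b) + M0 * X)
       \<le> 1 / (4 * h ^ b * h ^ (2 * b)) * 2 ^ (8 * b) * ((cT ^ (8 * b) + M0 * Sc) * h ^ (4 * b))"
      by (rule mult_left_mono[OF le]) (use hb in simp)
    also have "h ^ (4 * b) = h ^ b * (h ^ b * h ^ (2 * b))" by (simp flip: power_add)
    also have "1 / (4 * h ^ b * h ^ (2 * b)) * 2 ^ (8 * b) * ((cT ^ (8 * b) + M0 * Sc) * (h ^ b * (h ^ b * h ^ (2 * b))))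
        = h ^ b * (2 ^ (8 * b) * (cT ^ (8 * b) + M0 * Sc) / 4)"
      using hb h by (simp add: field_simps)
    finally show ?thesis .
  qed
  have br: "h ^ b / 2 * 16 * A + h ^ (2 * b) / (4 * h ^ b) * Ex
           + 1 / (4 * h ^ b * h ^ (2 * b)) * 2 ^ (8 * b) * (T ^ (8 * b) + M0 * X)
      \<le> h ^ b * (8 * A + Bx / 4 + 2 ^ (8 * b) * (cT ^ (8 * b) + M0 * Sc) / 4)"
  proof -
    have "h ^ b / 2 * 16 * A + h ^ (2 * b) / (4 * h ^ b) * Ex
           + 1 / (4 * h ^ b * h ^ (2 * b)) * 2 ^ (8 * b) * (T ^ (8 * b) + M0 * X)
      \<le> h ^ b * (8 * A) + h ^ b * (Bx / 4) + h ^ b * (2 ^ (8 * b) * (cT ^ (8 * b) + M0 * Sc) / 4)"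
      by (intro add_mono t2 t3) (simp add: t1)
    also have "\<dots> = h ^ b * (8 * A + Bx / 4 + 2 ^ (8 * b) * (cT ^ (8 * b) + M0 * Sc) / 4)"
      by (simp only: distrib_left)
    finally show ?thesis .
  qed
  have br0: "0 \<le> h ^ b / 2 * 16 * A + h ^ (2 * b) / (4 * h ^ b) * Ex
           + 1 / (4 * h ^ b * h ^ (2 * b)) * 2 ^ (8 * b) * (T ^ (8 * b) + M0 * X)"
    using h A Ex X M0 T by (intro add_nonneg_nonneg mult_nonneg_nonneg divide_nonneg_nonneg) auto
  have Tn: "T ^ (2 * nT) \<le> cT ^ (2 * nT) * h ^ (2 * nT)"
    using power_mono[OF T(2) T(1), of "2 * nT"] by (simp add: power_mult_distrib)
  have "K1 * T ^ (2 * nT) * (h ^ b / 2 * 16 * A + h ^ (2 * b) / (4 * h ^ b) * Ex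
           + 1 / (4 * h ^ b * h ^ (2 * b)) * 2 ^ (8 * b) * (T ^ (8 * b) + M0 * X))
      \<le> K1 * (cT ^ (2 * nT) * h ^ (2 * nT)) * (h ^ b * (8 * A + Bx / 4 + 2 ^ (8 * b) * (cT ^ (8 * b) + M0 * Sc) / 4))"
    by (intro mult_mono mult_left_mono Tn br br0 K1) (use T cT h K1 in auto)
  also have "\<dots> = (K1 * cT ^ (2 * nT) * (8 * A + Bx / 4 + 2 ^ (8 * b) * (cT ^ (8 * b) + M0 * Sc) / 4)) * h ^ (2 * nT + b)"
    by (simp only: power_add mult_ac)
  finally show ?thesis .
qed

theorem lemma3p5:
  fixes M :: "'w measure"
    and m :: nat and r :: "nat \<Rightarrow> real"
    and gam :: "real \<Rightarrow> 'w \<Rightarrow> real \<Rightarrow> real \<times> (real^'d)"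
    and dt :: "real \<Rightarrow> nat \<Rightarrow> real"
    and y0 :: "'w \<Rightarrow> real^'e"
    and y :: "real \<Rightarrow> 'w \<Rightarrow> real \<Rightarrow> real^'e"
    and f :: "real^'e \<Rightarrow> real^'e"
    and g :: "real^'e \<Rightarrow> real^'d^'e"
    and C :: real
    and F :: "real^'e \<Rightarrow> (real^'e)^('d^'b)"
    and al :: "letter list"
  assumes P: "prob_space M"
    and r0: "r 0 = 0" and rm: "r m = 1" and rmono: "strict_mono_on {..m} r"
    and pl: "\<And>h w i u. h > 0 \<Longrightarrow> w \<in> space M \<Longrightarrow> i < m \<Longrightarrow> u \<in> {r i..r (Suc i)} \<Longrightarrow>
          gam h w u = gam h w (r i) + ((u - r i) / (r (Suc i) - r i)) *\<^sub>R
                                        (gam h w (r (Suc i)) - gam h w (r i))"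
    and tinc: "\<And>h w i. h > 0 \<Longrightarrow> w \<in> space M \<Longrightarrow> i < m \<Longrightarrow>
          fst (gam h w (r (Suc i))) - fst (gam h w (r i)) = dt h i"
    and tinc_O: "\<And>i. i < m \<Longrightarrow> (\<lambda>h. dt h i) \<in> O[at_right 0](\<lambda>h. h)"
    and winc_int: "\<And>h i j k. h > 0 \<Longrightarrow> i < m \<Longrightarrow>
          integrable M (\<lambda>w. \<bar>(snd (gam h w (r (Suc i))) - snd (gam h w (r i))) $ j\<bar> ^ (2 * k))"
    and winc_O: "\<And>i j k. i < m \<Longrightarrow>
          (\<lambda>h. integral\<^sup>L M (\<lambda>w. \<bar>(snd (gam h w (r (Suc i))) - snd (gam h w (r i))) $ j\<bar> ^ (2 * k)))
            \<in> O[at_right 0](\<lambda>h. h ^ k)"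
    and y0_meas: "y0 \<in> borel_measurable M"
    and y0_L4: "integrable M (\<lambda>w. norm (y0 w) ^ 4)"
    and indep: "\<And>h. h > 0 \<Longrightarrow>
          (\<lambda>w. restrict (gam h w) {0..1}) \<in> M \<rightarrow>\<^sub>M PiM {0..1} (\<lambda>_. borel) \<and>
          (\<forall>A \<in> sets borel. \<forall>B \<in> sets (PiM {0..1} (\<lambda>_. borel)).
             measure M {w \<in> space M. y0 w \<in> A \<and> restrict (gam h w) {0..1} \<in> B}
             = measure M {w \<in> space M. y0 w \<in> A} * measure M {w \<in> space M. restrict (gam h w) {0..1} \<in> B})"
    and f_growth: "\<And>z. norm (f z) \<le> C * (1 + norm z)"
    and g_growth: "\<And>z. norm (g z) \<le> C * (1 + norm z)"
    and exp_int: "\<And>h. h > 0 \<Longrightarrow> integrable M (\<lambda>w. exp (16 * C * pl_length r m (gam h w)))"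
    and exp_bdd: "\<exists>B. \<forall>\<^sub>F h in at_right 0. integral\<^sup>L M (\<lambda>w. exp (16 * C * pl_length r m (gam h w))) \<le> B"
    and y_init: "\<And>h w. h > 0 \<Longrightarrow> w \<in> space M \<Longrightarrow> y h w 0 = y0 w"
    and y_ode: "\<And>h w i u. h > 0 \<Longrightarrow> w \<in> space M \<Longrightarrow> i < m \<Longrightarrow> u \<in> {r i..r (Suc i)} \<Longrightarrow>
          (y h w has_vector_derivative
             (let D = (1 / (r (Suc i) - r i)) *\<^sub>R (gam h w (r (Suc i)) - gam h w (r i))
              in fst D *\<^sub>R f (y h w u) + g (y h w u) *v snd D))
          (at u within {r i..r (Suc i)})"
    and y_meas: "\<And>h u. h > 0 \<Longrightarrow> u \<in> {0..1} \<Longrightarrow> (\<lambda>w. y h w u) \<in> borel_measurable M"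
    and F_lip: "\<exists>L. L-lipschitz_on UNIV F"
  shows "(\<forall>\<^sub>F h in at_right 0. integrable M (\<lambda>w. J_norm2 r m (gam h w) (y h w) F al))
       \<and> (\<lambda>h. integral\<^sup>L M (\<lambda>w. J_norm2 r m (gam h w) (y h w) F al))
            \<in> O[at_right 0](\<lambda>h. h powr (2 * ord al + 1))"
proof -
  interpret prob_space M by (rule P)
  note rf = r_facts[OF r0 rm rmono]
  have "norm (f 0) \<le> C" using f_growth[of 0] by simp
  then have C0: "0 \<le> C" by (meson norm_ge_zero order_trans)
  obtain L where Lip: "L-lipschitz_on UNIV F" using F_lip by blast
  have L0: "0 \<le> L" using Lip by (simp add: lipschitz_on_def)
  have contF: "continuous_on UNIV F" by (rule lipschitz_on_continuous_on[OF Lip])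
  have Fmeas: "F \<in> borel_measurable borel" by (rule borel_measurable_continuous_onI[OF contF])
  define nT where "nT = cnt Tau al"
  define nW where "nW = cnt Omega al"
  define b where "b = Suc nW"
  define q where "q = 4 * b"
  have q8: "2 * q = 8 * b" unfolding q_def by simp
  define T where "T h = (\<Sum>i<m. \<bar>dt h i\<bar>)" for h
  define Dw where "Dw h w i j = \<bar>(snd (gam h w (r (Suc i))) - snd (gam h w (r i))) $ j\<bar>" for h w i j
  define Wc where "Wc h w = (\<Sum>i<m. \<Sum>j\<in>UNIV. Dw h w i j)" for h w
  define ln where "ln h w = pl_length r m (gam h w)" for h w
  define K1 where "K1 = real CARD('d) ^ nW * L\<^sup>2 * (2 * C)\<^sup>2"
  define M0 where "M0 = (real m * real CARD('d)) ^ (8 * b)"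
  define G where "G h w = K1 * T h ^ (2 * nT) * (h ^ b / 2 * (16 * (1 + norm (y0 w) ^ 4))
     + h ^ (2 * b) / (4 * h ^ b) * exp (16 * C * ln h w)
     + 1 / (4 * h ^ b * h ^ (2 * b)) * 2 ^ (8 * b) * (T h ^ (8 * b) + M0 * (\<Sum>i<m. \<Sum>j\<in>UNIV. Dw h w i j ^ (2 * q))))"
    for h w
  have K10: "0 \<le> K1" unfolding K1_def by simp
  have M00: "0 \<le> M0" unfolding M0_def by simp
  have T0: "0 \<le> T h" for h unfolding T_def by (simp add: sum_nonneg)
  have Dw0: "0 \<le> Dw h w i j" for h w i j unfolding Dw_def by simp
  have Wc0: "0 \<le> Wc h w" for h w unfolding Wc_def by (simp add: sum_nonneg Dw0)
  have J0: "0 \<le> J_norm2 r m (gam h w) (y h w) F al" for h w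
    unfolding J_norm2_def by (simp add: sum_nonneg)

  have PW: "J_norm2 r m (gam h w) (y h w) F al \<le> G h w" if h: "h > 0" and w: "w \<in> space M" for h w
  proof -
    note yp = y_props[OF r0 rm rmono y_ode[OF h w] f_growth g_growth]
    have VTe: "VT r m (gam h w) = T h" unfolding VT_def T_def using tinc[OF h w] by simp
    define Bd where "Bd = 2 * C * ln h w * (1 + norm (y0 w)) * exp (2 * C * ln h w)"
    define V where "V = VW r m (gam h w)"
    have V0: "0 \<le> V" unfolding V_def by (rule VW_nonneg)
    have ln0: "0 \<le> ln h w" unfolding ln_def pl_length_def by (simp add: sum_nonneg)
    have Yb: "\<And>u. u \<in> {0..1} \<Longrightarrow> norm (y h w u - y h w 0) \<le> Bd"
      using yp(2) y_init[OF h w] by (simp add: Bd_def ln_def)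
    have JF: "norm (J_F r m (gam h w) (y h w) F al ks) \<le> L * Bd * T h ^ nT * V ^ nW" for ks
      using J_F_bound[OF r0 rm rmono yp(1) Lip Yb, where al=al and ks=ks and p="gam h w"] VTe by (simp add: nT_def nW_def V_def)
    have Bd0: "0 \<le> Bd" unfolding Bd_def using C0 ln0 by simp
    have fin: "finite {ks::'d list. length ks = nW}"
      using finite_lists_length_eq[of "UNIV :: 'd set" nW] by simp
    have card: "card {ks::'d list. length ks = nW} = CARD('d) ^ nW"
      using card_lists_length_eq[of "UNIV :: 'd set" nW] by simp
    have "J_norm2 r m (gam h w) (y h w) F al \<le> real (card {ks::'d list. length ks = nW}) * (L * Bd * T h ^ nT * V ^ nW)\<^sup>2"
      unfolding J_norm2_def nW_def[symmetric]
    proof (rule sum_bounded_above)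
      fix ks :: "'d list"
      show "(norm (J_F r m (gam h w) (y h w) F al ks))\<^sup>2 \<le> (L * Bd * T h ^ nT * V ^ nW)\<^sup>2"
        by (rule power_mono[OF JF]) simp
    qed
    also have "\<dots> = K1 * T h ^ (2 * nT) * ((1 + norm (y0 w))\<^sup>2 * exp (4 * C * ln h w) * ((ln h w)\<^sup>2 * V ^ (2 * nW)))"
    proof -
      have "exp (2 * C * ln h w) ^ 2 = exp (4 * C * ln h w)"
        by (simp add: power2_eq_square flip: exp_add)
      then show ?thesis
        unfolding card K1_def Bd_def
        by (simp add: power_mult_distrib power_mult[symmetric] mult_ac)
    qed
    also have "\<dots> \<le> K1 * T h ^ (2 * nT) * ((1 + norm (y0 w))\<^sup>2 * exp (4 * C * ln h w) * (T h + Wc h w) ^ (2 * b))"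
    proof -
      have lnS: "ln h w \<le> T h + Wc h w"
      proof -
        have "ln h w = (\<Sum>i<m. norm (gam h w (r (Suc i)) - gam h w (r i)))"
          unfolding ln_def pl_length_def ..
        also have "\<dots> \<le> (\<Sum>i<m. \<bar>dt h i\<bar> + (\<Sum>j\<in>UNIV. Dw h w i j))"
        proof (rule sum_mono)
          fix i assume i: "i \<in> {..<m}"
          have "norm (gam h w (r (Suc i)) - gam h w (r i))
              \<le> norm (fst (gam h w (r (Suc i)) - gam h w (r i))) + norm (snd (gam h w (r (Suc i)) - gam h w (r i)))"
            by (metis norm_Pair_le prod.collapse)
          also have "\<dots> \<le> \<bar>dt h i\<bar> + (\<Sum>j\<in>UNIV. Dw h w i j)"
            using tinc[OF h w, of i] i norm_le_l1_cart[of "snd (gam h w (r (Suc i))) - snd (gam h w (r i))"]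
            by (simp add: Dw_def)
          finally show "norm (gam h w (r (Suc i)) - gam h w (r i)) \<le> \<bar>dt h i\<bar> + (\<Sum>j\<in>UNIV. Dw h w i j)" .
        qed
        also have "\<dots> = T h + Wc h w" unfolding T_def Wc_def by (simp add: sum.distrib)
        finally show ?thesis .
      qed
      have VS: "V \<le> T h + Wc h w"
      proof -
        have "V \<le> Wc h w" unfolding V_def VW_def Wc_def
          by (rule sum_mono) (unfold Dw_def, rule norm_le_l1_cart)
        then show ?thesis using T0[of h] by simp
      qed
      have "(ln h w)\<^sup>2 * V ^ (2 * nW) \<le> (T h + Wc h w)\<^sup>2 * (T h + Wc h w) ^ (2 * nW)"
        by (intro mult_mono power_mono lnS VS) (use ln0 V0 in auto)
      also have "\<dots> = (T h + Wc h w) ^ (2 * b)" by (simp add: b_def flip: power_add)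
      finally have c: "(ln h w)\<^sup>2 * V ^ (2 * nW) \<le> (T h + Wc h w) ^ (2 * b)" .
      show ?thesis
        by (intro mult_left_mono c) (use K10 T0 in auto)
    qed
    also have "\<dots> \<le> K1 * T h ^ (2 * nT) * (h ^ b * ((1 + norm (y0 w))\<^sup>2)\<^sup>2 / 2
        + h ^ (2 * b) * exp (4 * C * ln h w) ^ 4 / (4 * h ^ b)
        + ((T h + Wc h w) ^ (2 * b)) ^ 4 / (4 * h ^ b * h ^ (2 * b)))"
      by (intro mult_left_mono young3) (use K10 T0 h Wc0 in auto)
    also have "\<dots> \<le> G h w"
      unfolding G_def
    proof (intro mult_left_mono add_mono)
      have "((1 + norm (y0 w))\<^sup>2)\<^sup>2 = (1 + norm (y0 w)) ^ 4" by simp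
      also have "\<dots> \<le> 16 * (1 + norm (y0 w) ^ 4)" by (rule one_plus_pow4) simp
      finally show "h ^ b * ((1 + norm (y0 w))\<^sup>2)\<^sup>2 / 2 \<le> h ^ b / 2 * (16 * (1 + norm (y0 w) ^ 4))"
        using h by simp
      have "exp (4 * C * ln h w) ^ 4 = exp (16 * C * ln h w)"
        by (simp add: exp_of_nat_mult[symmetric])
      then show "h ^ (2 * b) * exp (4 * C * ln h w) ^ 4 / (4 * h ^ b) \<le> h ^ (2 * b) / (4 * h ^ b) * exp (16 * C * ln h w)"
        by simp
      have "((T h + Wc h w) ^ (2 * b)) ^ 4 = (T h + Wc h w) ^ (8 * b)" by (simp flip: power_mult)
      also have "\<dots> \<le> 2 ^ (8 * b) * (T h ^ (8 * b) + Wc h w ^ (8 * b))"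
        by (rule add_pow_le[OF T0 Wc0])
      also have "Wc h w ^ (8 * b) \<le> M0 * (\<Sum>i<m. \<Sum>j\<in>UNIV. Dw h w i j ^ (2 * q))"
      proof -
        have "Wc h w ^ (8 * b) \<le> real (card {..<m}) ^ (8 * b) * (\<Sum>i<m. (\<Sum>j\<in>UNIV. Dw h w i j) ^ (8 * b))"
          unfolding Wc_def by (rule sum_pow_le) (use rf(5) in \<open>auto simp: Dw0 sum_nonneg\<close>)
        also have "\<dots> \<le> real m ^ (8 * b) * (\<Sum>i<m. real CARD('d) ^ (8 * b) * (\<Sum>j\<in>UNIV. Dw h w i j ^ (8 * b)))"
          unfolding card_lessThan by (intro mult_left_mono sum_mono sum_pow_le) (auto simp: Dw0)
        also have "\<dots> = M0 * (\<Sum>i<m. \<Sum>j\<in>UNIV. Dw h w i j ^ (2 * q))"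
          unfolding M0_def q8 by (simp add: sum_distrib_left power_mult_distrib mult_ac)
        finally show ?thesis .
      qed
      then have "2 ^ (8 * b) * (T h ^ (8 * b) + Wc h w ^ (8 * b))
          \<le> 2 ^ (8 * b) * (T h ^ (8 * b) + M0 * (\<Sum>i<m. \<Sum>j\<in>UNIV. Dw h w i j ^ (2 * q)))"
        by simp
      finally have le: "((T h + Wc h w) ^ (2 * b)) ^ 4 \<le> 2 ^ (8 * b) * (T h ^ (8 * b) + M0 * (\<Sum>i<m. \<Sum>j\<in>UNIV. Dw h w i j ^ (2 * q)))" .
      have "((T h + Wc h w) ^ (2 * b)) ^ 4 / (4 * h ^ b * h ^ (2 * b))
          \<le> 2 ^ (8 * b) * (T h ^ (8 * b) + M0 * (\<Sum>i<m. \<Sum>j\<in>UNIV. Dw h w i j ^ (2 * q))) / (4 * h ^ b * h ^ (2 * b))"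
        by (rule divide_right_mono[OF le]) (use h in simp)
      then show "((T h + Wc h w) ^ (2 * b)) ^ 4 / (4 * h ^ b * h ^ (2 * b))
          \<le> 1 / (4 * h ^ b * h ^ (2 * b)) * 2 ^ (8 * b) * (T h ^ (8 * b) + M0 * (\<Sum>i<m. \<Sum>j\<in>UNIV. Dw h w i j ^ (2 * q)))"
        by simp
    qed (use K10 T0 in auto)
    finally show ?thesis .
  qed

  have gm: "(\<lambda>w. gam h w u) \<in> borel_measurable M" if h: "h > 0" and u: "u \<in> {0..1}" for h u
  proof -
    have "(\<lambda>w. restrict (gam h w) {0..1} u) \<in> borel_measurable M"
      by (rule measurable_compose[OF conjunct1[OF indep[OF h]] measurable_component_singleton[OF u]])
    then show ?thesis using u by (simp add: restrict_def)
  qed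
  have Jm: "(\<lambda>w. J_norm2 r m (gam h w) (y h w) F al) \<in> borel_measurable M" if h: "h > 0" for h
  proof -
    have pm: "(\<lambda>w. gam h w (r i)) \<in> borel_measurable M" if "i \<le> m" for i
      using gm[OF h] rf(1,2) that by auto
    have contphi: "continuous_on {0..1} (\<lambda>u. F (y h w u))" if "w \<in> space M" for w
      by (rule continuous_on_compose2[OF contF y_props(1)[OF r0 rm rmono y_ode[OF h that] f_growth g_growth]]) auto
    have phim: "(\<lambda>w. F (y h w u)) \<in> borel_measurable M" if "u \<in> {0..1}" for u
      by (rule measurable_compose[OF y_meas[OF h that] Fmeas])
    have m1: "(\<lambda>w. iint (\<lambda>u. F (y h w u)) (pl_deriv r m (gam h w)) (rev al) ks 1) \<in> borel_measurable M" for ks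
      by (rule iint_measurable[where phi="\<lambda>w u. F (y h w u)" and p="\<lambda>w. gam h w", OF r0 rm rmono contphi phim pm]) auto
    have m2: "(\<lambda>w. iint (\<lambda>u. 1::real) (pl_deriv r m (gam h w)) (rev al) ks 1) \<in> borel_measurable M" for ks
      by (rule iint_measurable[where phi="\<lambda>w u. 1::real" and p="\<lambda>w. gam h w", OF r0 rm rmono _ _ pm]) auto
    have m3: "(\<lambda>w. F (y h w 0)) \<in> borel_measurable M" by (rule phim) simp
    note [measurable] = m1 m2 m3
    show ?thesis
      unfolding J_norm2_def J_F_def I_F_def I_one_def
      by measurable
  qed
  have Dwi: "integrable M (\<lambda>w. Dw h w i j ^ (2 * q))" if h: "h > 0" and i: "i < m" for h i j
    unfolding Dw_def by (rule winc_int[OF h i])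
  have i1: "integrable M (\<lambda>w. 16 * (1 + norm (y0 w) ^ 4))"
    by (intro integrable_mult_right Bochner_Integration.integrable_add integrable_const y0_L4)
  have i2: "integrable M (\<lambda>w. exp (16 * C * ln h w))" if h: "h > 0" for h
    unfolding ln_def by (rule exp_int[OF h])
  have i3: "integrable M (\<lambda>w. \<Sum>i<m. \<Sum>j\<in>UNIV. Dw h w i j ^ (2 * q))" if h: "h > 0" for h
    by (intro Bochner_Integration.integrable_sum Dwi[OF h]) auto
  have Gint: "integrable M (G h)" if h: "h > 0" for h
    unfolding G_def
    by (intro integrable_mult_right Bochner_Integration.integrable_add integrable_const i1 i2[OF h] i3[OF h])
  have Jint: "integrable M (\<lambda>w. J_norm2 r m (gam h w) (y h w) F al)" if h: "h > 0" for h
  proof (rule Bochner_Integration.integrable_bound[OF Gint[OF h] Jm[OF h]])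
    show "AE w in M. norm (J_norm2 r m (gam h w) (y h w) F al) \<le> norm (G h w)"
    proof (rule AE_I2)
      fix w assume w: "w \<in> space M"
      show "norm (J_norm2 r m (gam h w) (y h w) F al) \<le> norm (G h w)"
        using PW[OF h w] J0[of h w] by simp
    qed
  qed
  have ev_int: "\<forall>\<^sub>F h in at_right 0. integrable M (\<lambda>w. J_norm2 r m (gam h w) (y h w) F al)"
    using eventually_at_right_less[of "0::real"] by (rule eventually_mono) (rule Jint)

  have "\<forall>i\<in>{..<m}. \<exists>c. eventually (\<lambda>h. norm (dt h i) \<le> c * norm h) (at_right 0)"
  proof
    fix i assume "i \<in> {..<m}"
    then have i: "i < m" by simp
    obtain c where "c > 0" "eventually (\<lambda>h. norm (dt h i) \<le> c * norm h) (at_right 0)"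
      by (rule landau_o.bigE[OF tinc_O[OF i]])
    then show "\<exists>c. eventually (\<lambda>h. norm (dt h i) \<le> c * norm h) (at_right 0)" by blast
  qed
  from bchoice[OF this] obtain ct where ct: "\<forall>i\<in>{..<m}. eventually (\<lambda>h. norm (dt h i) \<le> ct i * norm h) (at_right 0)"
    ..
  have ev_ct: "eventually (\<lambda>h. \<forall>i\<in>{..<m}. norm (dt h i) \<le> ct i * norm h) (at_right 0)"
    by (rule eventually_ball_finite[OF finite_lessThan ct])
  have "\<forall>ij\<in>{..<m} \<times> (UNIV :: 'd set). \<exists>c. eventually (\<lambda>h. norm (integral\<^sup>L M (\<lambda>w. Dw h w (fst ij) (snd ij) ^ (2 * q))) \<le> c * norm (h ^ q)) (at_right 0)"
  proof
    fix ij :: "nat \<times> 'd" assume "ij \<in> {..<m} \<times> (UNIV :: 'd set)"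
    then have i: "fst ij < m" by auto
    obtain c where "c > 0" "eventually (\<lambda>h. norm (integral\<^sup>L M (\<lambda>w. Dw h w (fst ij) (snd ij) ^ (2 * q))) \<le> c * norm (h ^ q)) (at_right 0)"
      unfolding Dw_def by (rule landau_o.bigE[OF winc_O[OF i, of "snd ij" q]])
    then show "\<exists>c. eventually (\<lambda>h. norm (integral\<^sup>L M (\<lambda>w. Dw h w (fst ij) (snd ij) ^ (2 * q))) \<le> c * norm (h ^ q)) (at_right 0)"
      by blast
  qed
  from bchoice[OF this] obtain cD where cD: "\<forall>ij\<in>{..<m} \<times> (UNIV :: 'd set). eventually (\<lambda>h. norm (integral\<^sup>L M (\<lambda>w. Dw h w (fst ij) (snd ij) ^ (2 * q))) \<le> cD ij * norm (h ^ q)) (at_right 0)"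
    ..
  have ev_cD: "eventually (\<lambda>h. \<forall>ij\<in>{..<m} \<times> (UNIV :: 'd set). norm (integral\<^sup>L M (\<lambda>w. Dw h w (fst ij) (snd ij) ^ (2 * q))) \<le> cD ij * norm (h ^ q)) (at_right 0)"
    by (rule eventually_ball_finite[OF _ cD]) simp
  obtain Bx where ev_exp: "\<forall>\<^sub>F h in at_right 0. integral\<^sup>L M (\<lambda>w. exp (16 * C * pl_length r m (gam h w))) \<le> Bx"
    using exp_bdd by blast
  have ev01: "eventually (\<lambda>h. h \<in> {0<..<1}) (at_right (0::real))"
    by (rule eventually_at_right_real) simp
  define A4 where "A4 = integral\<^sup>L M (\<lambda>w. norm (y0 w) ^ 4)"
  have A40: "0 \<le> A4" unfolding A4_def by (rule Bochner_Integration.integral_nonneg) simp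
  define cT where "cT = (\<Sum>i<m. ct i)"
  define Sc where "Sc = (\<Sum>i<m. \<Sum>j\<in>UNIV. cD (i, j))"
  define Cst where "Cst = K1 * cT ^ (2 * nT) * (8 * (1 + A4) + Bx / 4 + 2 ^ (8 * b) * (cT ^ (8 * b) + M0 * Sc) / 4)"
  have ordeq: "2 * ord al + 1 = real (2 * nT + b)"
    unfolding ord_def nT_def nW_def[symmetric] b_def by simp
  have ev_O: "\<forall>\<^sub>F h in at_right 0. norm (integral\<^sup>L M (\<lambda>w. J_norm2 r m (gam h w) (y h w) F al))
      \<le> Cst * norm (h powr (2 * ord al + 1))"
    using ev01 ev_ct ev_cD ev_exp
  proof eventually_elim
    case (elim h)
    then have h: "0 < h" "h \<le> 1" by auto
    define Ex where "Ex = integral\<^sup>L M (\<lambda>w. exp (16 * C * ln h w))"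
    define X where "X = (\<Sum>i<m. \<Sum>j\<in>UNIV. integral\<^sup>L M (\<lambda>w. Dw h w i j ^ (2 * q)))"
    have Ex0: "0 \<le> Ex" unfolding Ex_def by (rule Bochner_Integration.integral_nonneg) simp
    have ExB: "Ex \<le> Bx" using elim(4) unfolding Ex_def ln_def by simp
    have X0: "0 \<le> X" unfolding X_def
      by (intro sum_nonneg Bochner_Integration.integral_nonneg) simp
    have XS: "X \<le> Sc * h ^ (4 * b)"
    proof -
      have "X \<le> (\<Sum>i<m. \<Sum>j\<in>UNIV. cD (i, j) * h ^ q)"
        unfolding X_def
      proof (intro sum_mono)
        fix i j assume "i \<in> {..<m}"
        then have "norm (integral\<^sup>L M (\<lambda>w. Dw h w i j ^ (2 * q))) \<le> cD (i, j) * norm (h ^ q)"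
          using elim(3) by auto
        then show "integral\<^sup>L M (\<lambda>w. Dw h w i j ^ (2 * q)) \<le> cD (i, j) * h ^ q"
          using h by simp
      qed
      also have "\<dots> = Sc * h ^ (4 * b)" unfolding Sc_def q_def by (simp add: sum_distrib_right)
      finally show ?thesis .
    qed
    have Tle: "T h \<le> cT * h"
    proof -
      have "T h \<le> (\<Sum>i<m. ct i * h)" unfolding T_def
        by (rule sum_mono) (use elim(2) h in auto)
      then show ?thesis unfolding cT_def by (simp add: sum_distrib_right)
    qed
    have EG: "integral\<^sup>L M (G h) = K1 * T h ^ (2 * nT) * (h ^ b / 2 * 16 * (1 + A4) + h ^ (2 * b) / (4 * h ^ b) * Ex
           + 1 / (4 * h ^ b * h ^ (2 * b)) * 2 ^ (8 * b) * (T h ^ (8 * b) + M0 * X))"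
    proof -
      have e1: "integral\<^sup>L M (\<lambda>w. 16 * (1 + norm (y0 w) ^ 4)) = 16 * (1 + A4)"
        unfolding A4_def using y0_L4 by (simp add: Bochner_Integration.integral_add prob_space)
      have "integral\<^sup>L M (\<lambda>w. \<Sum>i<m. \<Sum>j\<in>UNIV. Dw h w i j ^ (2 * q))
          = (\<Sum>i<m. integral\<^sup>L M (\<lambda>w. \<Sum>j\<in>UNIV. Dw h w i j ^ (2 * q)))"
        by (rule Bochner_Integration.integral_sum) (auto intro!: Bochner_Integration.integrable_sum Dwi[OF h(1)])
      also have "\<dots> = X" unfolding X_def
        by (intro sum.cong refl Bochner_Integration.integral_sum) (auto intro!: Dwi[OF h(1)])
      finally have e3: "integral\<^sup>L M (\<lambda>w. \<Sum>i<m. \<Sum>j\<in>UNIV. Dw h w i j ^ (2 * q)) = X" .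
      have e2: "integral\<^sup>L M (\<lambda>w. exp (16 * C * ln h w)) = Ex" unfolding Ex_def ..
      define P1 where "P1 = h ^ b / 2"
      define P2 where "P2 = h ^ (2 * b) / (4 * h ^ b)"
      define P3 where "P3 = 1 / (4 * h ^ b * h ^ (2 * b)) * 2 ^ (8 * b)"
      have ia: "integrable M (\<lambda>w. P1 * (16 * (1 + norm (y0 w) ^ 4)))" by (intro integrable_mult_right i1)
      have ib: "integrable M (\<lambda>w. P2 * exp (16 * C * ln h w))" by (intro integrable_mult_right i2[OF h(1)])
      have ic: "integrable M (\<lambda>w. P3 * (T h ^ (8 * b) + M0 * (\<Sum>i<m. \<Sum>j\<in>UNIV. Dw h w i j ^ (2 * q))))"
        by (intro integrable_mult_right Bochner_Integration.integrable_add integrable_const i3[OF h(1)])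
      have ic2: "integrable M (\<lambda>w. M0 * (\<Sum>i<m. \<Sum>j\<in>UNIV. Dw h w i j ^ (2 * q)))"
        by (intro integrable_mult_right i3[OF h(1)])
      have "integral\<^sup>L M (G h) = K1 * T h ^ (2 * nT) * integral\<^sup>L M (\<lambda>w. P1 * (16 * (1 + norm (y0 w) ^ 4))
          + P2 * exp (16 * C * ln h w) + P3 * (T h ^ (8 * b) + M0 * (\<Sum>i<m. \<Sum>j\<in>UNIV. Dw h w i j ^ (2 * q))))"
        unfolding G_def P1_def P2_def P3_def by (rule integral_mult_right_zero)
      also have "integral\<^sup>L M (\<lambda>w. P1 * (16 * (1 + norm (y0 w) ^ 4))
          + P2 * exp (16 * C * ln h w) + P3 * (T h ^ (8 * b) + M0 * (\<Sum>i<m. \<Sum>j\<in>UNIV. Dw h w i j ^ (2 * q))))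
          = integral\<^sup>L M (\<lambda>w. P1 * (16 * (1 + norm (y0 w) ^ 4))) + integral\<^sup>L M (\<lambda>w. P2 * exp (16 * C * ln h w))
            + integral\<^sup>L M (\<lambda>w. P3 * (T h ^ (8 * b) + M0 * (\<Sum>i<m. \<Sum>j\<in>UNIV. Dw h w i j ^ (2 * q))))"
        using ia ib ic by (simp only: Bochner_Integration.integral_add Bochner_Integration.integrable_add)
      also have "integral\<^sup>L M (\<lambda>w. P3 * (T h ^ (8 * b) + M0 * (\<Sum>i<m. \<Sum>j\<in>UNIV. Dw h w i j ^ (2 * q))))
          = P3 * (T h ^ (8 * b) + M0 * X)"
        using ic2 by (simp add: Bochner_Integration.integral_add prob_space e3)
      also have "integral\<^sup>L M (\<lambda>w. P1 * (16 * (1 + norm (y0 w) ^ 4))) = P1 * (16 * (1 + A4))"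
      proof -
        have "integral\<^sup>L M (\<lambda>w. P1 * (16 * (1 + norm (y0 w) ^ 4))) = P1 * integral\<^sup>L M (\<lambda>w. 16 * (1 + norm (y0 w) ^ 4))"
          by (rule integral_mult_right_zero)
        then show ?thesis by (simp only: e1)
      qed
      also have "integral\<^sup>L M (\<lambda>w. P2 * exp (16 * C * ln h w)) = P2 * Ex"
        by (simp only: integral_mult_right_zero e2)
      finally show ?thesis unfolding P1_def P2_def P3_def by (simp only: mult.assoc)
    qed
    have "integral\<^sup>L M (\<lambda>w. J_norm2 r m (gam h w) (y h w) F al) \<le> integral\<^sup>L M (G h)"
      by (rule integral_mono[OF Jint[OF h(1)] Gint[OF h(1)] PW[OF h(1)]])
    also have "\<dots> \<le> Cst * h ^ (2 * nT + b)"
      unfolding EG Cst_def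
      by (rule alg_bound[OF h T0 Tle Ex0 ExB _ K10 X0 XS M00]) (use A40 in simp)
    also have "h ^ (2 * nT + b) = h powr (2 * ord al + 1)"
      by (simp only: ordeq powr_realpow[OF h(1)])
    finally have le: "integral\<^sup>L M (\<lambda>w. J_norm2 r m (gam h w) (y h w) F al) \<le> Cst * h powr (2 * ord al + 1)" .
    have "0 \<le> integral\<^sup>L M (\<lambda>w. J_norm2 r m (gam h w) (y h w) F al)"
      by (rule Bochner_Integration.integral_nonneg) (simp add: J0)
    then show ?case using le by simp
  qed
  show ?thesis
    by (rule conjI[OF ev_int bigoI[OF ev_O]])
qed

end
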